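(* Let $(\mathcal{C},\mathsf{I},\otimes,\lambda,\rho,\alpha)$ be a left-skew monoidal category, let $(T,\eta,\mu)$ be a monoid in it, and let $(\mathcal{E},\mathcal{M})$ be an orthogonal factorization system on $\mathcal{C}$ such that $\mathcal{E}$ is closed under $(-)\otimes S$ for every object $(S,s)$ of $\mathcal{M}/T$ (i.e. $e\otimes S\in\mathcal{E}$ whenever $e\in\mathcal{E}$). Then $(\mathcal{M}/T, \mathsf{J}, \boxdot, \ell, r, a)$, as defined in the context, is a left-skew monoidal category. If $\lambda$ is a natural isomorphism (the skew monoidal category $\mathcal{C}$ is left-normal), then so is $\ell$. If moreover $\mathcal{E}$ is also closed under $S\otimes(-)$ for every object $(S,s)$ of $\mathcal{M}/T$ and $(\mathcal{C},\mathsf{I},\otimes,\lambda,\rho,\alpha)$ is monoidal (i.e. $\lambda,\rho,\alpha$ are all isomorphisms), then $(\mathcal{M}/T,\mathsf{J},\boxdot,\ell,r,a)$ is monoidal.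
   Context: A left-skew monoidal category consists of a category $\mathcal{C}$, an object $\mathsf{I}$, a functor $\otimes:\mathcal{C}\times\mathcal{C}\to\mathcal{C}$ and natural transformations (not necessarily invertible) $\lambda_X:\mathsf{I}\otimes X\to X$, $\rho_X : X\to X\otimes \mathsf{I}$, $\alpha_{X,Y,Z}:(X\otimes Y)\otimes Z\to X\otimes(Y\otimes Z)$ satisfying: $\lambda_{\mathsf{I}}\circ\rho_{\mathsf{I}} = \mathrm{id}$; $(X\otimes\lambda_Y)\circ\alpha_{X,\mathsf{I},Y}\circ(\rho_X\otimes Y) = \mathrm{id}$; $\lambda_{X\otimes Y}\circ\alpha_{\mathsf{I},X,Y} = \lambda_X\otimes Y$; $\alpha_{X,Y,\mathsf{I}}\circ\rho_{X\otimes Y} = X\otimes\rho_Y$; $(X\otimes\alpha_{Y,Z,W})\circ\alpha_{X,Y\otimes Z,W}\circ(\alpha_{X,Y,Z}\otimes W) = \alpha_{X,Y,Z\otimes W}\circ\alpha_{X\otimes Y,Z,W}$. It is monoidal if $\lambda,\rho,\alpha$ are all isomorphisms. A monoid is $(T,\eta:\mathsf{I}\to T,\mu:T\otimes T\to T)$ with $\mu\circ(\eta\otimes T) = \lambda_T$, $\mu\circ(T\otimes\eta)\circ\rho_T = \mathrm{id}_T$, $\mu\circ(\mu\otimes T) = \mu\circ(T\otimes\mu)\circ\alpha_{T,T,T}$. An orthogonal factorization system $(\mathcal{E},\mathcal{M})$ on $\mathcal{C}$: both classes contain all isomorphisms and are closed under composition; for every commuting square $g\circ e = m\circ f$ with $e\in\mathcal{E}$,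 $m\in\mathcal{M}$ there is a unique $d$ with $d\circ e = f$ and $m\circ d = g$; every morphism factors as $m\circ e$ with $e\in\mathcal{E}$, $m\in\mathcal{M}$. $\mathcal{M}/T$ is the category with objects $(S,s)$, $s:S\to T$ in $\mathcal{M}$, and morphisms $f:(S,s)\to(S',s')$ the $f:S\to S'$ with $s'\circ f = s$. Structure on $\mathcal{M}/T$: factor $\eta = j\circ q$ with $q:\mathsf{I}\to\mathsf{J}$ in $\mathcal{E}$, $j:\mathsf{J}\to T$ in $\mathcal{M}$; the unit is $(\mathsf{J},j)$. For objects $(S,s),(S',s')$ factor $\mu\circ(s\otimes s') = (s\boxdot s')\circ q_{S,S'}$ with $q_{S,S'}:S\otimes S'\to S\boxdot S'$ in $\mathcal{E}$, $s\boxdot s'$ in $\mathcal{M}$; the tensor is $(S\boxdot S', s\boxdot s')$. For morphisms $f:(S_1,s_1)\to(S_2,s_2)$, $f':(S'_1,s'_1)\to(S'_2,s'_2)$, $f\boxdot f'$ is the unique morphism with $(f\boxdot f')\circ q_{S_1,S'_1} = q_{S_2,S'_2}\circ(f\otimes f')$ and $(s_2\boxdot s'_2)\circ(f\boxdot f') = s_1\boxdot s'_1$. The left unitor $\ell_S : \mathsf{J}\boxdot S\to S$ is the unique morphism with $\ell_S\circ q_{\mathsf{J},S}\circ(q\otimes S) = \lambda_S$ and $s\circ\ell_S = j\boxdot s$. The right unitor is $r_S = q_{S,\mathsf{J}}\circ(S\otimes q)\circ\rho_S : S\to S\boxdot\mathsf{J}$. The associator $a_{S,S',S''} : (S\boxdot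 S')\boxdot S''\to S\boxdot(S'\boxdot S'')$ is the unique morphism with $a\circ q_{S\boxdot S',S''}\circ(q_{S,S'}\otimes S'') = q_{S,S'\boxdot S''}\circ(S\otimes q_{S',S''})\circ\alpha_{S,S',S''}$ and $(s\boxdot(s'\boxdot s''))\circ a = (s\boxdot s')\boxdot s''$. (These diagonals exist and are unique by orthogonality, using closure of $\mathcal{E}$ under $(-)\otimes S$.) *)

theory Defs
  imports Main
begin

record ('o, 'a) cat =
  Obj  :: "'o set"
  Arr  :: "'a set"
  Dom  :: "'a \<Rightarrow> 'o"
  Cod  :: "'a \<Rightarrow> 'o"
  Idn  :: "'o \<Rightarrow> 'a"
  Cmp  :: "'a \<Rightarrow> 'a \<Rightarrow> 'a"   (* Cmp C g f = g \<circ> f *)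

definition hom :: "('o, 'a) cat \<Rightarrow> 'o \<Rightarrow> 'o \<Rightarrow> 'a set" where
  "hom C A B = {f \<in> Arr C. Dom C f = A \<and> Cod C f = B}"

definition category :: "('o, 'a) cat \<Rightarrow> bool" where
  "category C \<longleftrightarrow>
     (\<forall>f\<in>Arr C. Dom C f \<in> Obj C \<and> Cod C f \<in> Obj C) \<and>
     (\<forall>A\<in>Obj C. Idn C A \<in> hom C A A) \<and>
     (\<forall>f\<in>Arr C. \<forall>g\<in>Arr C. Cod C f = Dom C g \<longrightarrow>
         Cmp C g f \<in> hom C (Dom C f) (Cod C g)) \<and>
     (\<forall>f\<in>Arr C. Cmp C (Idn C (Cod C f)) f = f \<and> Cmp C f (Idn C (Dom C f)) = f) \<and>
     (\<forall>f\<in>Arr C. \<forall>g\<in>Arr C. \<forall>h\<in>Arr C. Cod C f = Dom C g \<longrightarrow> Cod C g = Dom C h \<longrightarrow>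
         Cmp C h (Cmp C g f) = Cmp C (Cmp C h g) f)"

definition iso :: "('o, 'a) cat \<Rightarrow> 'a \<Rightarrow> bool" where
  "iso C f \<longleftrightarrow> f \<in> Arr C \<and>
     (\<exists>g\<in>hom C (Cod C f) (Dom C f). Cmp C g f = Idn C (Dom C f) \<and> Cmp C f g = Idn C (Cod C f))"

record ('o, 'a) skew =
  UnO  :: "'o"
  TO  :: "'o \<Rightarrow> 'o \<Rightarrow> 'o"
  TA  :: "'a \<Rightarrow> 'a \<Rightarrow> 'a"
  Lam :: "'o \<Rightarrow> 'a"
  Rho :: "'o \<Rightarrow> 'a"
  Alp :: "'o \<Rightarrow> 'o \<Rightarrow> 'o \<Rightarrow> 'a"

definition left_skew_monoidal :: "('o, 'a) cat \<Rightarrow> ('o, 'a) skew \<Rightarrow> bool" where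
  "left_skew_monoidal C K \<longleftrightarrow>
     category C \<and> UnO K \<in> Obj C \<and>
     (\<forall>X\<in>Obj C. \<forall>Y\<in>Obj C. TO K X Y \<in> Obj C) \<and>
     (\<forall>f\<in>Arr C. \<forall>g\<in>Arr C. TA K f g \<in> hom C (TO K (Dom C f) (Dom C g)) (TO K (Cod C f) (Cod C g))) \<and>
     (\<forall>X\<in>Obj C. \<forall>Y\<in>Obj C. TA K (Idn C X) (Idn C Y) = Idn C (TO K X Y)) \<and>
     (\<forall>f\<in>Arr C. \<forall>f'\<in>Arr C. \<forall>g\<in>Arr C. \<forall>g'\<in>Arr C.
        Cod C f = Dom C f' \<longrightarrow> Cod C g = Dom C g' \<longrightarrow>
        TA K (Cmp C f' f) (Cmp C g' g) = Cmp C (TA K f' g') (TA K f g)) \<and>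
     (\<forall>X\<in>Obj C. Lam K X \<in> hom C (TO K (UnO K) X) X) \<and>
     (\<forall>X\<in>Obj C. Rho K X \<in> hom C X (TO K X (UnO K))) \<and>
     (\<forall>X\<in>Obj C. \<forall>Y\<in>Obj C. \<forall>Z\<in>Obj C.
        Alp K X Y Z \<in> hom C (TO K (TO K X Y) Z) (TO K X (TO K Y Z))) \<and>
     (\<forall>f\<in>Arr C. Cmp C f (Lam K (Dom C f)) = Cmp C (Lam K (Cod C f)) (TA K (Idn C (UnO K)) f)) \<and>
     (\<forall>f\<in>Arr C. Cmp C (Rho K (Cod C f)) f = Cmp C (TA K f (Idn C (UnO K))) (Rho K (Dom C f))) \<and>
     (\<forall>f\<in>Arr C. \<forall>g\<in>Arr C. \<forall>h\<in>Arr C.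
        Cmp C (Alp K (Cod C f) (Cod C g) (Cod C h)) (TA K (TA K f g) h) =
        Cmp C (TA K f (TA K g h)) (Alp K (Dom C f) (Dom C g) (Dom C h))) \<and>
     Cmp C (Lam K (UnO K)) (Rho K (UnO K)) = Idn C (UnO K) \<and>
     (\<forall>X\<in>Obj C. \<forall>Y\<in>Obj C.
        Cmp C (TA K (Idn C X) (Lam K Y)) (Cmp C (Alp K X (UnO K) Y) (TA K (Rho K X) (Idn C Y)))
          = Idn C (TO K X Y)) \<and>
     (\<forall>X\<in>Obj C. \<forall>Y\<in>Obj C.
        Cmp C (Lam K (TO K X Y)) (Alp K (UnO K) X Y) = TA K (Lam K X) (Idn C Y)) \<and>
     (\<forall>X\<in>Obj C. \<forall>Y\<in>Obj C.
        Cmp C (Alp K X Y (UnO K)) (Rho K (TO K X Y)) = TA K (Idn C X) (Rho K Y)) \<and>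
     (\<forall>X\<in>Obj C. \<forall>Y\<in>Obj C. \<forall>Z\<in>Obj C. \<forall>W\<in>Obj C.
        Cmp C (TA K (Idn C X) (Alp K Y Z W))
              (Cmp C (Alp K X (TO K Y Z) W) (TA K (Alp K X Y Z) (Idn C W)))
        = Cmp C (Alp K X Y (TO K Z W)) (Alp K (TO K X Y) Z W))"

definition monoidal :: "('o, 'a) cat \<Rightarrow> ('o, 'a) skew \<Rightarrow> bool" where
  "monoidal C K \<longleftrightarrow> left_skew_monoidal C K \<and>
     (\<forall>X\<in>Obj C. iso C (Lam K X)) \<and> (\<forall>X\<in>Obj C. iso C (Rho K X)) \<and>
     (\<forall>X\<in>Obj C. \<forall>Y\<in>Obj C. \<forall>Z\<in>Obj C. iso C (Alp K X Y Z))"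

definition monoid :: "('o, 'a) cat \<Rightarrow> ('o, 'a) skew \<Rightarrow> 'o \<Rightarrow> 'a \<Rightarrow> 'a \<Rightarrow> bool" where
  "monoid C K T eta mu \<longleftrightarrow>
     T \<in> Obj C \<and> eta \<in> hom C (UnO K) T \<and> mu \<in> hom C (TO K T T) T \<and>
     Cmp C mu (TA K eta (Idn C T)) = Lam K T \<and>
     Cmp C mu (Cmp C (TA K (Idn C T) eta) (Rho K T)) = Idn C T \<and>
     Cmp C mu (TA K mu (Idn C T)) = Cmp C mu (Cmp C (TA K (Idn C T) mu) (Alp K T T T))"

definition ofs :: "('o, 'a) cat \<Rightarrow> 'a set \<Rightarrow> 'a set \<Rightarrow> bool" where
  "ofs C E M \<longleftrightarrow>
     E \<subseteq> Arr C \<and> M \<subseteq> Arr C \<and>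
     (\<forall>f. iso C f \<longrightarrow> f \<in> E \<and> f \<in> M) \<and>
     (\<forall>f\<in>E. \<forall>g\<in>E. Cod C f = Dom C g \<longrightarrow> Cmp C g f \<in> E) \<and>
     (\<forall>f\<in>M. \<forall>g\<in>M. Cod C f = Dom C g \<longrightarrow> Cmp C g f \<in> M) \<and>
     (\<forall>e\<in>E. \<forall>m\<in>M. \<forall>f\<in>Arr C. \<forall>g\<in>Arr C.
        Dom C f = Dom C e \<longrightarrow> Cod C f = Dom C m \<longrightarrow> Dom C g = Cod C e \<longrightarrow> Cod C g = Cod C m \<longrightarrow>
        Cmp C g e = Cmp C m f \<longrightarrow>
        (\<exists>!d. d \<in> hom C (Cod C e) (Dom C m) \<and> Cmp C d e = f \<and> Cmp C m d = g)) \<and>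
     (\<forall>f\<in>Arr C. \<exists>e\<in>E. \<exists>m\<in>M. Cod C e = Dom C m \<and> Cmp C m e = f)"

text \<open>Objects are pairs (S,s) with s : S -> T in M; an arrow (S,s) -> (S',s') is
  represented as the triple ((S,s), f, (S',s')) with f : S -> S' and s' o f = s.\<close>

definition slice :: "('o, 'a) cat \<Rightarrow> 'a set \<Rightarrow> 'o \<Rightarrow>
    ('o \<times> 'a, ('o \<times> 'a) \<times> 'a \<times> ('o \<times> 'a)) cat" where
  "slice C M T =
    (let Ob = {(S, s). S \<in> Obj C \<and> s \<in> M \<and> s \<in> hom C S T} in
     \<lparr> Obj = Ob,
       Arr = {(x, f, y). x \<in> Ob \<and> y \<in> Ob \<and> f \<in> hom C (fst x) (fst y) \<and> Cmp C (snd y) f = snd x},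
       Dom = (\<lambda>F. fst F),
       Cod = (\<lambda>F. snd (snd F)),
       Idn = (\<lambda>x. (x, Idn C (fst x), x)),
       Cmp = (\<lambda>G F. (fst F, Cmp C (fst (snd G)) (fst (snd F)), snd (snd G))) \<rparr>)"

text \<open>The skew monoidal structure on M/T, built from chosen factorizations:
  eta = j o q0 (q0 in E, j in M), and for objects x=(S,s), y=(S',s'):
  mu o (s (x) s') = mS x y o qS x y with qS x y in E, mS x y in M.\<close>

definition slice_skew :: "('o, 'a) cat \<Rightarrow> ('o, 'a) skew \<Rightarrow> 'a \<Rightarrow> 'a \<Rightarrow>
    ('o \<times> 'a \<Rightarrow> 'o \<times> 'a \<Rightarrow> 'a) \<Rightarrow> ('o \<times> 'a \<Rightarrow> 'o \<times> 'a \<Rightarrow> 'a) \<Rightarrow>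
    ('o \<times> 'a, ('o \<times> 'a) \<times> 'a \<times> ('o \<times> 'a)) skew" where
  "slice_skew C K q0 j qS mS =
    (let Jx = (Cod C q0, j);
         box = (\<lambda>x y. (Cod C (qS x y), mS x y))
     in
     \<lparr> UnO = Jx,
       TO = box,
       TA = (\<lambda>F G.
          let x1 = fst F; f = fst (snd F); x2 = snd (snd F);
              y1 = fst G; g = fst (snd G); y2 = snd (snd G)
          in (box x1 y1,
              THE d. d \<in> hom C (fst (box x1 y1)) (fst (box x2 y2)) \<and>
                     Cmp C d (qS x1 y1) = Cmp C (qS x2 y2) (TA K f g) \<and>
                     Cmp C (mS x2 y2) d = mS x1 y1,
              box x2 y2)),
       Lam = (\<lambda>x.
          (box Jx x,
           THE d. d \<in> hom C (fst (box Jx x)) (fst x) \<and>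
                  Cmp C d (Cmp C (qS Jx x) (TA K q0 (Idn C (fst x)))) = Lam K (fst x) \<and>
                  Cmp C (snd x) d = mS Jx x,
           x)),
       Rho = (\<lambda>x.
          (x,
           Cmp C (qS x Jx) (Cmp C (TA K (Idn C (fst x)) q0) (Rho K (fst x))),
           box x Jx)),
       Alp = (\<lambda>x y z.
          (box (box x y) z,
           THE d. d \<in> hom C (fst (box (box x y) z)) (fst (box x (box y z))) \<and>
                  Cmp C d (Cmp C (qS (box x y) z) (TA K (qS x y) (Idn C (fst z)))) =
                    Cmp C (qS x (box y z))
                      (Cmp C (TA K (Idn C (fst x)) (qS y z)) (Alp K (fst x) (fst y) (fst z))) \<and>
                  Cmp C (mS x (box y z)) d = mS (box x y) z,
           box x (box y z))) \<rparr>)"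

end

theory Submission
  imports Defs
begin

locale sk =
  fixes C :: "('o, 'a) cat" and K :: "('o, 'a) skew"
    and T :: 'o and eta mu :: 'a and E M :: "'a set"
    and q0 j :: 'a and qS mS :: "'o \<times> 'a \<Rightarrow> 'o \<times> 'a \<Rightarrow> 'a"
  assumes skew: "left_skew_monoidal C K"
    and mon: "monoid C K T eta mu"
    and fs: "ofs C E M"
    and closE: "\<forall>e\<in>E. \<forall>x\<in>Obj (slice C M T). TA K e (Idn C (fst x)) \<in> E"
    and q0: "q0 \<in> E" "Dom C q0 = UnO K"
    and j: "j \<in> M" "Dom C j = Cod C q0" "Cod C j = T"
    and eta_fact: "Cmp C j q0 = eta"
    and qS: "\<forall>x\<in>Obj (slice C M T). \<forall>y\<in>Obj (slice C M T).
               qS x y \<in> E \<and> Dom C (qS x y) = TO K (fst x) (fst y)"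
    and mS: "\<forall>x\<in>Obj (slice C M T). \<forall>y\<in>Obj (slice C M T).
               mS x y \<in> M \<and> Dom C (mS x y) = Cod C (qS x y) \<and> Cod C (mS x y) = T"
    and mu_fact: "\<forall>x\<in>Obj (slice C M T). \<forall>y\<in>Obj (slice C M T).
               Cmp C (mS x y) (qS x y) = Cmp C mu (TA K (snd x) (snd y))"
begin

abbreviation cp (infixr "\<cdot>" 55) where "g \<cdot> f \<equiv> Cmp C g f"
abbreviation tp (infix "\<otimes>" 70) where "f \<otimes> g \<equiv> TA K f g"
abbreviation "Ar \<equiv> Arr C"
abbreviation "Ob \<equiv> Obj C"
abbreviation "dm \<equiv> Dom C"
abbreviation "cd \<equiv> Cod C"
abbreviation "idn \<equiv> Idn C"
abbreviation "U \<equiv> UnO K"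
abbreviation "tO \<equiv> TO K"
abbreviation "lam \<equiv> Lam K"
abbreviation "rho \<equiv> Rho K"
abbreviation "alp \<equiv> Alp K"
abbreviation "S \<equiv> slice C M T"
abbreviation "SO \<equiv> Obj (slice C M T)"

lemmas skc = skew[unfolded left_skew_monoidal_def]
lemmas sk1 = skc[THEN conjunct1]
lemmas sk2 = skc[THEN conjunct2, THEN conjunct1]
lemmas sk3 = skc[THEN conjunct2, THEN conjunct2, THEN conjunct1]
lemmas sk4 = skc[THEN conjunct2, THEN conjunct2, THEN conjunct2, THEN conjunct1]
lemmas sk5 = skc[THEN conjunct2, THEN conjunct2, THEN conjunct2, THEN conjunct2, THEN conjunct1]
lemmas sk6 = skc[THEN conjunct2, THEN conjunct2, THEN conjunct2, THEN conjunct2, THEN conjunct2, THEN conjunct1]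
lemmas sk7 = skc[THEN conjunct2, THEN conjunct2, THEN conjunct2, THEN conjunct2, THEN conjunct2, THEN conjunct2, THEN conjunct1]
lemmas sk8 = skc[THEN conjunct2, THEN conjunct2, THEN conjunct2, THEN conjunct2, THEN conjunct2, THEN conjunct2, THEN conjunct2, THEN conjunct1]
lemmas sk9 = skc[THEN conjunct2, THEN conjunct2, THEN conjunct2, THEN conjunct2, THEN conjunct2, THEN conjunct2, THEN conjunct2, THEN conjunct2, THEN conjunct1]
lemmas sk10 = skc[THEN conjunct2, THEN conjunct2, THEN conjunct2, THEN conjunct2, THEN conjunct2, THEN conjunct2, THEN conjunct2, THEN conjunct2, THEN conjunct2, THEN conjunct1]
lemmas sk11 = skc[THEN conjunct2, THEN conjunct2, THEN conjunct2, THEN conjunct2, THEN conjunct2, THEN conjunct2, THEN conjunct2, THEN conjunct2, THEN conjunct2, THEN conjunct2, THEN conjunct1]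
lemmas sk12 = skc[THEN conjunct2, THEN conjunct2, THEN conjunct2, THEN conjunct2, THEN conjunct2, THEN conjunct2, THEN conjunct2, THEN conjunct2, THEN conjunct2, THEN conjunct2, THEN conjunct2, THEN conjunct1]
lemmas sk13 = skc[THEN conjunct2, THEN conjunct2, THEN conjunct2, THEN conjunct2, THEN conjunct2, THEN conjunct2, THEN conjunct2, THEN conjunct2, THEN conjunct2, THEN conjunct2, THEN conjunct2, THEN conjunct2, THEN conjunct1]
lemmas sk14 = skc[THEN conjunct2, THEN conjunct2, THEN conjunct2, THEN conjunct2, THEN conjunct2, THEN conjunct2, THEN conjunct2, THEN conjunct2, THEN conjunct2, THEN conjunct2, THEN conjunct2, THEN conjunct2, THEN conjunct2, THEN conjunct1]
lemmas sk15 = skc[THEN conjunct2, THEN conjunct2, THEN conjunct2, THEN conjunct2, THEN conjunct2, THEN conjunct2, THEN conjunct2, THEN conjunct2, THEN conjunct2, THEN conjunct2, THEN conjunct2, THEN conjunct2, THEN conjunct2, THEN conjunct2, THEN conjunct1]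
lemmas sk16 = skc[THEN conjunct2, THEN conjunct2, THEN conjunct2, THEN conjunct2, THEN conjunct2, THEN conjunct2, THEN conjunct2, THEN conjunct2, THEN conjunct2, THEN conjunct2, THEN conjunct2, THEN conjunct2, THEN conjunct2, THEN conjunct2, THEN conjunct2, THEN conjunct1]
lemmas sk17 = skc[THEN conjunct2, THEN conjunct2, THEN conjunct2, THEN conjunct2, THEN conjunct2, THEN conjunct2, THEN conjunct2, THEN conjunct2, THEN conjunct2, THEN conjunct2, THEN conjunct2, THEN conjunct2, THEN conjunct2, THEN conjunct2, THEN conjunct2, THEN conjunct2]
lemmas monc = mon[unfolded monoid_def]
lemmas mn1 = monc[THEN conjunct1]
lemmas mn2 = monc[THEN conjunct2, THEN conjunct1]
lemmas mn3 = monc[THEN conjunct2, THEN conjunct2, THEN conjunct1]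
lemmas mn4 = monc[THEN conjunct2, THEN conjunct2, THEN conjunct2, THEN conjunct1]
lemmas mn5 = monc[THEN conjunct2, THEN conjunct2, THEN conjunct2, THEN conjunct2, THEN conjunct1]
lemmas mn6 = monc[THEN conjunct2, THEN conjunct2, THEN conjunct2, THEN conjunct2, THEN conjunct2]
lemmas fsc = fs[unfolded ofs_def]
lemmas fs1 = fsc[THEN conjunct1]
lemmas fs2 = fsc[THEN conjunct2, THEN conjunct1]
lemmas fs3 = fsc[THEN conjunct2, THEN conjunct2, THEN conjunct1]
lemmas fs4 = fsc[THEN conjunct2, THEN conjunct2, THEN conjunct2, THEN conjunct1]
lemmas fs5 = fsc[THEN conjunct2, THEN conjunct2, THEN conjunct2, THEN conjunct2, THEN conjunct1]
lemmas fs6 = fsc[THEN conjunct2, THEN conjunct2, THEN conjunct2, THEN conjunct2, THEN conjunct2, THEN conjunct1]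
lemmas fs7 = fsc[THEN conjunct2, THEN conjunct2, THEN conjunct2, THEN conjunct2, THEN conjunct2, THEN conjunct2]

lemma cat: "category C" by (rule sk1)
lemmas catc = cat[unfolded category_def]
lemmas ct1 = catc[THEN conjunct1]
lemmas ct2 = catc[THEN conjunct2, THEN conjunct1]
lemmas ct3 = catc[THEN conjunct2, THEN conjunct2, THEN conjunct1]
lemmas ct4 = catc[THEN conjunct2, THEN conjunct2, THEN conjunct2, THEN conjunct1]
lemmas ct5 = catc[THEN conjunct2, THEN conjunct2, THEN conjunct2, THEN conjunct2]

lemma arr_dom[simp]: "f \<in> Ar \<Longrightarrow> dm f \<in> Ob" using ct1 by blast
lemma arr_cod[simp]: "f \<in> Ar \<Longrightarrow> cd f \<in> Ob" using ct1 by blast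
lemma idn_arr[simp]: "A \<in> Ob \<Longrightarrow> idn A \<in> Ar" using ct2 unfolding hom_def by blast
lemma idn_dom[simp]: "A \<in> Ob \<Longrightarrow> dm (idn A) = A" using ct2 unfolding hom_def by blast
lemma idn_cod[simp]: "A \<in> Ob \<Longrightarrow> cd (idn A) = A" using ct2 unfolding hom_def by blast
lemma comp_arr[simp]: "f \<in> Ar \<Longrightarrow> g \<in> Ar \<Longrightarrow> cd f = dm g \<Longrightarrow> g \<cdot> f \<in> Ar"
  using ct3 unfolding hom_def by blast
lemma comp_dom[simp]: "f \<in> Ar \<Longrightarrow> g \<in> Ar \<Longrightarrow> cd f = dm g \<Longrightarrow> dm (g \<cdot> f) = dm f"
  using ct3 unfolding hom_def by blast
lemma comp_cod[simp]: "f \<in> Ar \<Longrightarrow> g \<in> Ar \<Longrightarrow> cd f = dm g \<Longrightarrow> cd (g \<cdot> f) = cd g"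
  using ct3 unfolding hom_def by blast
lemma idl[simp]: "f \<in> Ar \<Longrightarrow> cd f = A \<Longrightarrow> idn A \<cdot> f = f"
  using ct4 by blast
lemma idr[simp]: "f \<in> Ar \<Longrightarrow> dm f = A \<Longrightarrow> f \<cdot> idn A = f"
  using ct4 by blast
lemma assoc: "f \<in> Ar \<Longrightarrow> g \<in> Ar \<Longrightarrow> h \<in> Ar \<Longrightarrow> cd f = dm g \<Longrightarrow> cd g = dm h \<Longrightarrow>
   (h \<cdot> g) \<cdot> f = h \<cdot> (g \<cdot> f)"
  using ct5 by metis

lemma U_obj[simp]: "U \<in> Ob" by (rule sk2)
lemma tO_obj[simp]: "X \<in> Ob \<Longrightarrow> Y \<in> Ob \<Longrightarrow> tO X Y \<in> Ob" using sk3 by blast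
lemma tp_arr[simp]: "f \<in> Ar \<Longrightarrow> g \<in> Ar \<Longrightarrow> f \<otimes> g \<in> Ar" using sk4 unfolding hom_def by blast
lemma tp_dom[simp]: "f \<in> Ar \<Longrightarrow> g \<in> Ar \<Longrightarrow> dm (f \<otimes> g) = tO (dm f) (dm g)" using sk4 unfolding hom_def by blast
lemma tp_cod[simp]: "f \<in> Ar \<Longrightarrow> g \<in> Ar \<Longrightarrow> cd (f \<otimes> g) = tO (cd f) (cd g)" using sk4 unfolding hom_def by blast
lemma tp_id[simp]: "X \<in> Ob \<Longrightarrow> Y \<in> Ob \<Longrightarrow> idn X \<otimes> idn Y = idn (tO X Y)" using sk5 by blast
lemma tp_comp: "f \<in> Ar \<Longrightarrow> f' \<in> Ar \<Longrightarrow> g \<in> Ar \<Longrightarrow> g' \<in> Ar \<Longrightarrow> cd f = dm f' \<Longrightarrow> cd g = dm g' \<Longrightarrow>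
   (f' \<cdot> f) \<otimes> (g' \<cdot> g) = (f' \<otimes> g') \<cdot> (f \<otimes> g)" using sk6 by blast
lemma lam_arr[simp]: "X \<in> Ob \<Longrightarrow> lam X \<in> Ar" using sk7 unfolding hom_def by blast
lemma lam_dom[simp]: "X \<in> Ob \<Longrightarrow> dm (lam X) = tO U X" using sk7 unfolding hom_def by blast
lemma lam_cod[simp]: "X \<in> Ob \<Longrightarrow> cd (lam X) = X" using sk7 unfolding hom_def by blast
lemma rho_arr[simp]: "X \<in> Ob \<Longrightarrow> rho X \<in> Ar" using sk8 unfolding hom_def by blast
lemma rho_dom[simp]: "X \<in> Ob \<Longrightarrow> dm (rho X) = X" using sk8 unfolding hom_def by blast
lemma rho_cod[simp]: "X \<in> Ob \<Longrightarrow> cd (rho X) = tO X U" using sk8 unfolding hom_def by blast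
lemma alp_arr[simp]: "X \<in> Ob \<Longrightarrow> Y \<in> Ob \<Longrightarrow> Z \<in> Ob \<Longrightarrow> alp X Y Z \<in> Ar" using sk9 unfolding hom_def by blast
lemma alp_dom[simp]: "X \<in> Ob \<Longrightarrow> Y \<in> Ob \<Longrightarrow> Z \<in> Ob \<Longrightarrow> dm (alp X Y Z) = tO (tO X Y) Z" using sk9 unfolding hom_def by blast
lemma alp_cod[simp]: "X \<in> Ob \<Longrightarrow> Y \<in> Ob \<Longrightarrow> Z \<in> Ob \<Longrightarrow> cd (alp X Y Z) = tO X (tO Y Z)" using sk9 unfolding hom_def by blast
lemma lam_nat: "f \<in> Ar \<Longrightarrow> f \<cdot> lam (dm f) = lam (cd f) \<cdot> (idn U \<otimes> f)" using sk10 by blast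
lemma rho_nat: "f \<in> Ar \<Longrightarrow> rho (cd f) \<cdot> f = (f \<otimes> idn U) \<cdot> rho (dm f)" using sk11 by blast
lemma alp_nat: "f \<in> Ar \<Longrightarrow> g \<in> Ar \<Longrightarrow> h \<in> Ar \<Longrightarrow>
   alp (cd f) (cd g) (cd h) \<cdot> ((f \<otimes> g) \<otimes> h) = (f \<otimes> (g \<otimes> h)) \<cdot> alp (dm f) (dm g) (dm h)"
  using sk12 by blast
lemma ax1: "lam U \<cdot> rho U = idn U" by (rule sk13)
lemma ax2: "X \<in> Ob \<Longrightarrow> Y \<in> Ob \<Longrightarrow> (idn X \<otimes> lam Y) \<cdot> (alp X U Y \<cdot> (rho X \<otimes> idn Y)) = idn (tO X Y)"
  using sk14 by blast
lemma ax3: "X \<in> Ob \<Longrightarrow> Y \<in> Ob \<Longrightarrow> lam (tO X Y) \<cdot> alp U X Y = lam X \<otimes> idn Y"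
  using sk15 by blast
lemma ax4: "X \<in> Ob \<Longrightarrow> Y \<in> Ob \<Longrightarrow> alp X Y U \<cdot> rho (tO X Y) = idn X \<otimes> rho Y"
  using sk16 by blast
lemma ax5: "X \<in> Ob \<Longrightarrow> Y \<in> Ob \<Longrightarrow> Z \<in> Ob \<Longrightarrow> W \<in> Ob \<Longrightarrow>
  (idn X \<otimes> alp Y Z W) \<cdot> (alp X (tO Y Z) W \<cdot> (alp X Y Z \<otimes> idn W)) = alp X Y (tO Z W) \<cdot> alp (tO X Y) Z W"
  using sk17 by blast

lemma T_obj[simp]: "T \<in> Ob" by (rule mn1)
lemma eta_arr[simp]: "eta \<in> Ar" "dm eta = U" "cd eta = T" using mn2 unfolding hom_def by blast+
lemma mu_arr[simp]: "mu \<in> Ar" "dm mu = tO T T" "cd mu = T" using mn3 unfolding hom_def by blast+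
lemma mon1: "mu \<cdot> (eta \<otimes> idn T) = lam T" by (rule mn4)
lemma mon2: "mu \<cdot> ((idn T \<otimes> eta) \<cdot> rho T) = idn T" by (rule mn5)
lemma mon3: "mu \<cdot> (mu \<otimes> idn T) = mu \<cdot> ((idn T \<otimes> mu) \<cdot> alp T T T)" by (rule mn6)

lemma E_arr[simp]: "e \<in> E \<Longrightarrow> e \<in> Ar" using fs1 by blast
lemma M_arr[simp]: "e \<in> M \<Longrightarrow> e \<in> Ar" using fs2 by blast
lemma iso_E: "iso C f \<Longrightarrow> f \<in> E" using fs3 by blast
lemma iso_M: "iso C f \<Longrightarrow> f \<in> M" using fs3 by blast
lemma E_comp[simp]: "f \<in> E \<Longrightarrow> g \<in> E \<Longrightarrow> cd f = dm g \<Longrightarrow> g \<cdot> f \<in> E" using fs4 by blast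
lemma M_comp[simp]: "f \<in> M \<Longrightarrow> g \<in> M \<Longrightarrow> cd f = dm g \<Longrightarrow> g \<cdot> f \<in> M" using fs5 by blast
lemma lift: "e \<in> E \<Longrightarrow> m \<in> M \<Longrightarrow> f \<in> Ar \<Longrightarrow> g \<in> Ar \<Longrightarrow>
        dm f = dm e \<Longrightarrow> cd f = dm m \<Longrightarrow> dm g = cd e \<Longrightarrow> cd g = cd m \<Longrightarrow>
        g \<cdot> e = m \<cdot> f \<Longrightarrow>
        (\<exists>!d. d \<in> hom C (cd e) (dm m) \<and> d \<cdot> e = f \<and> m \<cdot> d = g)"
  using fs6 by blast
lemma factor: "f \<in> Ar \<Longrightarrow> \<exists>e\<in>E. \<exists>m\<in>M. cd e = dm m \<and> m \<cdot> e = f"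
  using fs7 by blast

lemma SO_iff: "x \<in> SO \<longleftrightarrow> fst x \<in> Ob \<and> snd x \<in> M \<and> snd x \<in> Ar \<and> dm (snd x) = fst x \<and> cd (snd x) = T"
  by (cases x) (auto simp add: slice_def hom_def)
lemma SO_fst[simp]: "x \<in> SO \<Longrightarrow> fst x \<in> Ob" by (simp add: SO_iff)
lemma SO_snd[simp]: "x \<in> SO \<Longrightarrow> snd x \<in> M" "x \<in> SO \<Longrightarrow> dm (snd x) = fst x" "x \<in> SO \<Longrightarrow> cd (snd x) = T"
  by (simp_all add: SO_iff)

lemma qS_E[simp]: "x \<in> SO \<Longrightarrow> y \<in> SO \<Longrightarrow> qS x y \<in> E" using qS by blast
lemma qS_dom[simp]: "x \<in> SO \<Longrightarrow> y \<in> SO \<Longrightarrow> dm (qS x y) = tO (fst x) (fst y)" using qS by blast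
lemma mS_M[simp]: "x \<in> SO \<Longrightarrow> y \<in> SO \<Longrightarrow> mS x y \<in> M" using mS by blast
lemma mS_dom[simp]: "x \<in> SO \<Longrightarrow> y \<in> SO \<Longrightarrow> dm (mS x y) = cd (qS x y)" using mS by blast
lemma mS_cod[simp]: "x \<in> SO \<Longrightarrow> y \<in> SO \<Longrightarrow> cd (mS x y) = T" using mS by blast
lemma muf: "x \<in> SO \<Longrightarrow> y \<in> SO \<Longrightarrow> mS x y \<cdot> qS x y = mu \<cdot> (snd x \<otimes> snd y)" using mu_fact by blast
lemma closE': "e \<in> E \<Longrightarrow> x \<in> SO \<Longrightarrow> e \<otimes> idn (fst x) \<in> E" using closE by blast

definition bx where "bx x y = (cd (qS x y), mS x y)"
definition "J = (cd q0, j)"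

lemma bx_SO[simp]: "x \<in> SO \<Longrightarrow> y \<in> SO \<Longrightarrow> bx x y \<in> SO"
  by (subst SO_iff) (simp add: bx_def)
lemma bx_fst[simp]: "fst (bx x y) = cd (qS x y)" and bx_snd[simp]: "snd (bx x y) = mS x y"
  by (simp_all add: bx_def)
lemma q0_simps[simp]: "q0 \<in> E" "dm q0 = U" "j \<in> M" "dm j = cd q0" "cd j = T"
  using q0 j by auto
lemma J_SO[simp]: "J \<in> SO" by (subst SO_iff) (simp add: J_def)
lemma J_fst[simp]: "fst J = cd q0" and J_snd[simp]: "snd J = j" by (simp_all add: J_def)


end

context sk begin
definition dg where "dg e m f g = (THE d. d \<in> hom C (cd e) (dm m) \<and> d \<cdot> e = f \<and> m \<cdot> d = g)"

lemma dg_prop: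
  assumes "e \<in> E" "m \<in> M" "f \<in> Ar" "g \<in> Ar" "dm f = dm e" "cd f = dm m" "dm g = cd e" "cd g = cd m"
    "g \<cdot> e = m \<cdot> f"
  shows "dg e m f g \<in> Ar" "dm (dg e m f g) = cd e" "cd (dg e m f g) = dm m"
    "dg e m f g \<cdot> e = f" "m \<cdot> dg e m f g = g"
proof -
  have "\<exists>!d. d \<in> hom C (cd e) (dm m) \<and> d \<cdot> e = f \<and> m \<cdot> d = g" using lift assms by blast
  from theI'[OF this] have "dg e m f g \<in> hom C (cd e) (dm m) \<and> dg e m f g \<cdot> e = f \<and> m \<cdot> dg e m f g = g"
    unfolding dg_def .
  then show "dg e m f g \<in> Ar" "dm (dg e m f g) = cd e" "cd (dg e m f g) = dm m"
    "dg e m f g \<cdot> e = f" "m \<cdot> dg e m f g = g" unfolding hom_def by auto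
qed

lemma dg_uniq:
  assumes "e \<in> E" "m \<in> M" "d \<in> Ar" "dm d = cd e" "cd d = dm m" "d \<cdot> e = f" "m \<cdot> d = g"
  shows "dg e m f g = d"
proof -
  have a: "e \<in> Ar" "m \<in> Ar" using assms by auto
  have "\<exists>!d. d \<in> hom C (cd e) (dm m) \<and> d \<cdot> e = f \<and> m \<cdot> d = g"
    apply (rule lift[OF assms(1,2)])
    using assms a by (auto simp: assoc)
  moreover have "d \<in> hom C (cd e) (dm m) \<and> d \<cdot> e = f \<and> m \<cdot> d = g" using assms by (simp add: hom_def)
  ultimately show ?thesis unfolding dg_def by (rule the1_equality)
qed

lemma epi:
  assumes "e \<in> E" "m \<in> M" "d1 \<in> Ar" "dm d1 = cd e" "cd d1 = dm m" "d2 \<in> Ar" "dm d2 = cd e" "cd d2 = dm m"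
    "d1 \<cdot> e = d2 \<cdot> e" "m \<cdot> d1 = m \<cdot> d2"
  shows "d1 = d2"
  using dg_uniq[OF assms(1-5) refl refl] dg_uniq[OF assms(1,2,6,7,8), of "d1 \<cdot> e" "m \<cdot> d1"] assms(9,10)
  by simp

lemma isoI: "f \<in> Ar \<Longrightarrow> g \<in> Ar \<Longrightarrow> dm g = cd f \<Longrightarrow> cd g = dm f \<Longrightarrow> g \<cdot> f = idn (dm f) \<Longrightarrow>
   f \<cdot> g = idn (cd f) \<Longrightarrow> iso C f"
  unfolding iso_def hom_def by blast

lemma iso_arr: "iso C f \<Longrightarrow> f \<in> Ar" unfolding iso_def by blast

lemma isoD: assumes "iso C f" obtains g where "g \<in> Ar" "dm g = cd f" "cd g = dm f"
  "g \<cdot> f = idn (dm f)" "f \<cdot> g = idn (cd f)"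
  using assms unfolding iso_def hom_def by blast

lemma iso_inv: assumes "iso C f" "g \<in> Ar" "dm g = cd f" "cd g = dm f"
  "g \<cdot> f = idn (dm f)" "f \<cdot> g = idn (cd f)" shows "iso C g"
proof (rule isoI[of g f])
  show "f \<in> Ar" using iso_arr[OF assms(1)] .
qed (use assms in simp_all)

lemma ex1_eq: "\<exists>!x. P x \<Longrightarrow> P a \<Longrightarrow> P b \<Longrightarrow> a = b" by blast

lemma EM_iso: assumes "e \<in> E" "e \<in> M" shows "iso C e"
proof -
  have a: "e \<in> Ar" using assms by simp
  have "\<exists>!d. d \<in> hom C (cd e) (dm e) \<and> d \<cdot> e = idn (dm e) \<and> e \<cdot> d = idn (cd e)"
    by (rule lift[OF assms(1,2)]) (use a in simp_all)
  then obtain d where "d \<in> hom C (cd e) (dm e)" "d \<cdot> e = idn (dm e)" "e \<cdot> d = idn (cd e)" by blast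
  then show ?thesis using a by (intro isoI[of e d]) (auto simp: hom_def)
qed

lemma split_iso: assumes "e \<in> E" "m \<in> M" "cd e = dm m" "m \<cdot> e = idn (dm e)" shows "iso C m"
proof -
  have a: "e \<in> Ar" "m \<in> Ar" using assms by auto
  have "cd m = cd (m \<cdot> e)" using comp_cod[OF a(1) a(2) assms(3)] by simp
  also have "\<dots> = dm e" using assms(4) a by simp
  finally have cm: "cd m = dm e" .
  have u: "\<exists>!d. d \<in> hom C (cd e) (dm m) \<and> d \<cdot> e = e \<and> m \<cdot> d = m"
    by (rule lift[OF assms(1,2)]) (use a assms in simp_all)
  have x1: "idn (cd e) \<in> hom C (cd e) (dm m) \<and> idn (cd e) \<cdot> e = e \<and> m \<cdot> idn (cd e) = m"
    using assms a by (simp add: hom_def)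
  have y1: "(e \<cdot> m) \<cdot> e = e" using assms a cm by (simp add: assoc)
  have y2: "m \<cdot> (e \<cdot> m) = m" using assms a cm by (simp add: assoc[symmetric])
  have x2: "e \<cdot> m \<in> hom C (cd e) (dm m) \<and> (e \<cdot> m) \<cdot> e = e \<and> m \<cdot> (e \<cdot> m) = m"
    using assms a cm y1 y2 by (simp add: hom_def)
  have "e \<cdot> m = idn (cd e)" using ex1_eq[OF u x2 x1] .
  then show ?thesis using assms a cm by (intro isoI[of m e]) auto
qed

lemma M_cancel: assumes "m' \<in> M" "m \<in> M" "f \<in> Ar" "cd f = dm m'" "m' \<cdot> f = m" shows "f \<in> M"
proof -
  obtain e1 m1 where em: "e1 \<in> E" "m1 \<in> M" "cd e1 = dm m1" "m1 \<cdot> e1 = f" using factor[OF assms(3)] by blast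
  have a: "e1 \<in> Ar" "m1 \<in> Ar" "m \<in> Ar" "m' \<in> Ar" using em assms by auto
  have d1: "dm e1 = dm f" "cd m1 = cd f" using comp_dom[OF a(1,2) em(3)] comp_cod[OF a(1,2) em(3)] em(4) by auto
  have dmm: "dm m = dm f" using comp_dom[OF assms(3) a(4) assms(4)] assms(5) by simp
  have cdm: "cd m = cd m'" using comp_cod[OF assms(3) a(4) assms(4)] assms(5) by simp
  have mm: "m' \<cdot> m1 \<in> M" using em assms d1 by simp
  have sq: "(m' \<cdot> m1) \<cdot> e1 = m" using assoc[OF a(1) a(2) a(4) em(3)] d1 assms em by simp
  have "\<exists>!d. d \<in> hom C (cd e1) (dm m) \<and> d \<cdot> e1 = idn (dm f) \<and> m \<cdot> d = m' \<cdot> m1"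
    by (rule lift[OF em(1) assms(2)]) (use a assms d1 dmm cdm sq em in simp_all)
  then obtain d where d: "d \<in> Ar" "dm d = cd e1" "cd d = dm f" "d \<cdot> e1 = idn (dm f)" "m \<cdot> d = m' \<cdot> m1"
    using dmm by (auto simp: hom_def)
  have u: "\<exists>!x. x \<in> hom C (cd e1) (dm (m' \<cdot> m1)) \<and> x \<cdot> e1 = e1 \<and> (m' \<cdot> m1) \<cdot> x = m' \<cdot> m1"
    by (rule lift[OF em(1) mm]) (use a assms d1 em in simp_all)
  have x1: "idn (cd e1) \<in> hom C (cd e1) (dm (m' \<cdot> m1)) \<and> idn (cd e1) \<cdot> e1 = e1 \<and> (m' \<cdot> m1) \<cdot> idn (cd e1) = m' \<cdot> m1"
    using em a assms d1 by (simp add: hom_def)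
  have y1: "(e1 \<cdot> d) \<cdot> e1 = e1" using assoc[OF a(1) d(1) a(1)] d a d1 by simp
  have "(m' \<cdot> m1) \<cdot> (e1 \<cdot> d) = ((m' \<cdot> m1) \<cdot> e1) \<cdot> d"
    using assoc[of d e1 "m' \<cdot> m1"] a assms d d1 em by simp
  then have y2: "(m' \<cdot> m1) \<cdot> (e1 \<cdot> d) = m' \<cdot> m1" using sq d by simp
  have x2: "e1 \<cdot> d \<in> hom C (cd e1) (dm (m' \<cdot> m1)) \<and> (e1 \<cdot> d) \<cdot> e1 = e1 \<and> (m' \<cdot> m1) \<cdot> (e1 \<cdot> d) = m' \<cdot> m1"
    using em a assms d1 d y1 y2 by (simp add: hom_def)
  have "e1 \<cdot> d = idn (cd e1)" using ex1_eq[OF u x2 x1] .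
  then have "iso C e1" using d a d1 by (intro isoI[of e1 d]) auto
  then have "e1 \<in> M" by (rule iso_M)
  then show ?thesis using em by (metis M_comp)
qed

lemma E_cancel: assumes "e \<in> E" "f \<in> Ar" "cd e = dm f" "f \<cdot> e \<in> E" shows "f \<in> E"
proof -
  obtain e1 m1 where em: "e1 \<in> E" "m1 \<in> M" "cd e1 = dm m1" "m1 \<cdot> e1 = f" using factor[OF assms(2)] by blast
  have a: "e1 \<in> Ar" "m1 \<in> Ar" "e \<in> Ar" using em assms by auto
  have d1: "dm e1 = dm f" "cd m1 = cd f" using comp_dom[OF a(1,2) em(3)] comp_cod[OF a(1,2) em(3)] em(4) by auto
  have ee: "e1 \<cdot> e \<in> E" using em assms d1 by simp
  have sq: "m1 \<cdot> (e1 \<cdot> e) = f \<cdot> e" using assoc[OF a(3) a(1) a(2) _ em(3)] assms d1 em by simp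
  have "\<exists>!d. d \<in> hom C (cd (f \<cdot> e)) (dm m1) \<and> d \<cdot> (f \<cdot> e) = e1 \<cdot> e \<and> m1 \<cdot> d = idn (cd f)"
    by (rule lift[OF assms(4) em(2)]) (use a assms d1 em sq in simp_all)
  then obtain d where d: "d \<in> Ar" "dm d = cd f" "cd d = dm m1" "d \<cdot> (f \<cdot> e) = e1 \<cdot> e" "m1 \<cdot> d = idn (cd f)"
    using assms by (auto simp: hom_def)
  have u: "\<exists>!x. x \<in> hom C (cd (e1 \<cdot> e)) (dm m1) \<and> x \<cdot> (e1 \<cdot> e) = e1 \<cdot> e \<and> m1 \<cdot> x = m1"
    by (rule lift[OF ee em(2)]) (use a assms d1 em in simp_all)
  have x1: "idn (dm m1) \<in> hom C (cd (e1 \<cdot> e)) (dm m1) \<and> idn (dm m1) \<cdot> (e1 \<cdot> e) = e1 \<cdot> e \<and> m1 \<cdot> idn (dm m1) = m1"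
    using em a assms d1 by (simp add: hom_def)
  have "(d \<cdot> m1) \<cdot> (e1 \<cdot> e) = d \<cdot> (m1 \<cdot> (e1 \<cdot> e))"
    using assoc[of "e1 \<cdot> e" m1 d] em a assms d1 d by simp
  then have y1: "(d \<cdot> m1) \<cdot> (e1 \<cdot> e) = e1 \<cdot> e" using sq d by simp
  have y2: "m1 \<cdot> (d \<cdot> m1) = m1" using assoc[OF a(2) d(1) a(2)] d a d1 by simp
  have x2: "d \<cdot> m1 \<in> hom C (cd (e1 \<cdot> e)) (dm m1) \<and> (d \<cdot> m1) \<cdot> (e1 \<cdot> e) = e1 \<cdot> e \<and> m1 \<cdot> (d \<cdot> m1) = m1"
    using em a assms d1 d y1 y2 by (simp add: hom_def)
  have "d \<cdot> m1 = idn (dm m1)" using ex1_eq[OF u x2 x1] .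
  then have "iso C m1" using d a d1 by (intro isoI[of m1 d]) auto
  then have "m1 \<in> E" by (rule iso_E)
  then show ?thesis using em by (metis E_comp)
qed

end

context sk begin

lemma comp_rw: "g \<cdot> f = h \<Longrightarrow> f \<in> Ar \<Longrightarrow> g \<in> Ar \<Longrightarrow> r \<in> Ar \<Longrightarrow> cd r = dm f \<Longrightarrow> cd f = dm g \<Longrightarrow>
   g \<cdot> (f \<cdot> r) = h \<cdot> r"
  by (metis assoc)

lemma tp_merge: "f \<in> Ar \<Longrightarrow> f' \<in> Ar \<Longrightarrow> g \<in> Ar \<Longrightarrow> g' \<in> Ar \<Longrightarrow> cd f = dm f' \<Longrightarrow> cd g = dm g' \<Longrightarrow>
   (f' \<otimes> g') \<cdot> (f \<otimes> g) = (f' \<cdot> f) \<otimes> (g' \<cdot> g)" by (simp add: tp_comp)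

lemma tp_merge3: "f \<in> Ar \<Longrightarrow> f' \<in> Ar \<Longrightarrow> g \<in> Ar \<Longrightarrow> g' \<in> Ar \<Longrightarrow> cd f = dm f' \<Longrightarrow> cd g = dm g' \<Longrightarrow>
   r \<in> Ar \<Longrightarrow> cd r = tO (dm f) (dm g) \<Longrightarrow>
   (f' \<otimes> g') \<cdot> ((f \<otimes> g) \<cdot> r) = ((f' \<cdot> f) \<otimes> (g' \<cdot> g)) \<cdot> r"
  by (simp add: tp_comp assoc)

lemmas nf = assoc tp_merge tp_merge3

lemma muf3: "x \<in> SO \<Longrightarrow> y \<in> SO \<Longrightarrow> r \<in> Ar \<Longrightarrow> cd r = tO (fst x) (fst y) \<Longrightarrow>
   mS x y \<cdot> (qS x y \<cdot> r) = mu \<cdot> ((snd x \<otimes> snd y) \<cdot> r)"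
  by (simp add: assoc[symmetric] muf)

lemma eta3: "r \<in> Ar \<Longrightarrow> cd r = U \<Longrightarrow> j \<cdot> (q0 \<cdot> r) = eta \<cdot> r"
  using eta_fact by (simp add: assoc[symmetric])

lemma SA_iff: "(x, f, y) \<in> Arr S \<longleftrightarrow> x \<in> SO \<and> y \<in> SO \<and> f \<in> Ar \<and> dm f = fst x \<and> cd f = fst y \<and> snd y \<cdot> f = snd x"
  by (auto simp add: slice_def hom_def Let_def)

definition tn where "tn x1 y1 x2 y2 f g = dg (qS x1 y1) (mS x2 y2) (qS x2 y2 \<cdot> (f \<otimes> g)) (mS x1 y1)"
definition ee where "ee x = qS J x \<cdot> (q0 \<otimes> idn (fst x))"
definition lm where "lm x = dg (ee x) (snd x) (lam (fst x)) (mS J x)"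
definition rh where "rh x = qS x J \<cdot> ((idn (fst x) \<otimes> q0) \<cdot> rho (fst x))"
definition ea where "ea x y z = qS (bx x y) z \<cdot> (qS x y \<otimes> idn (fst z))"
definition al where "al x y z = dg (ea x y z) (mS x (bx y z))
   (qS x (bx y z) \<cdot> ((idn (fst x) \<otimes> qS y z) \<cdot> alp (fst x) (fst y) (fst z))) (mS (bx x y) z)"

context
  fixes x1 y1 x2 y2 f g
  assumes h: "x1 \<in> SO" "y1 \<in> SO" "x2 \<in> SO" "y2 \<in> SO" "f \<in> Ar" "dm f = fst x1" "cd f = fst x2"
     "snd x2 \<cdot> f = snd x1" "g \<in> Ar" "dm g = fst y1" "cd g = fst y2" "snd y2 \<cdot> g = snd y1"
begin
lemma tn_sq: "mS x1 y1 \<cdot> qS x1 y1 = mS x2 y2 \<cdot> (qS x2 y2 \<cdot> (f \<otimes> g))"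
  using h by (simp add: muf muf3 tp_merge)
lemmas tn_p = dg_prop[OF qS_E[OF h(1,2)] mS_M[OF h(3,4)], of "qS x2 y2 \<cdot> (f \<otimes> g)" "mS x1 y1",
   folded tn_def, OF _ _ _ _ _ _ tn_sq]
lemma tn_arr[simp]: "tn x1 y1 x2 y2 f g \<in> Ar" using tn_p h by simp
lemma tn_dom[simp]: "dm (tn x1 y1 x2 y2 f g) = cd (qS x1 y1)" using tn_p h by simp
lemma tn_cod[simp]: "cd (tn x1 y1 x2 y2 f g) = cd (qS x2 y2)" using tn_p h by simp
lemma tn_q: "tn x1 y1 x2 y2 f g \<cdot> qS x1 y1 = qS x2 y2 \<cdot> (f \<otimes> g)" using tn_p h by simp
lemma tn_m[simp]: "mS x2 y2 \<cdot> tn x1 y1 x2 y2 f g = mS x1 y1" using tn_p h by simp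
lemma tn_uniq: "d \<in> Ar \<Longrightarrow> dm d = cd (qS x1 y1) \<Longrightarrow> cd d = cd (qS x2 y2) \<Longrightarrow>
    d \<cdot> qS x1 y1 = qS x2 y2 \<cdot> (f \<otimes> g) \<Longrightarrow> mS x2 y2 \<cdot> d = mS x1 y1 \<Longrightarrow> tn x1 y1 x2 y2 f g = d"
  unfolding tn_def using h by (intro dg_uniq) simp_all
end


lemma ee_E[simp]: "x \<in> SO \<Longrightarrow> ee x \<in> E" unfolding ee_def using closE'[OF q0_simps(1)] by simp
lemma ee_arr[simp]: "x \<in> SO \<Longrightarrow> ee x \<in> Ar" by (rule E_arr, simp)
lemma ee_dom[simp]: "x \<in> SO \<Longrightarrow> dm (ee x) = tO U (fst x)" unfolding ee_def by simp
lemma ee_cod[simp]: "x \<in> SO \<Longrightarrow> cd (ee x) = cd (qS J x)" unfolding ee_def by simp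

context fixes x assumes hx: "x \<in> SO"
begin
lemma lm_sq: "mS J x \<cdot> ee x = snd x \<cdot> lam (fst x)"
proof -
  have "snd x \<cdot> lam (fst x) = lam T \<cdot> (idn U \<otimes> snd x)" using lam_nat[of "snd x"] hx by simp
  also have "\<dots> = mu \<cdot> (eta \<otimes> snd x)" using hx by (simp add: mon1[symmetric] nf)
  also have "\<dots> = mS J x \<cdot> ee x" using hx by (simp add: ee_def muf3 nf eta_fact)
  finally show ?thesis by simp
qed
lemmas lm_p = dg_prop[OF ee_E[OF hx] SO_snd(1)[OF hx], of "lam (fst x)" "mS J x", folded lm_def, OF _ _ _ _ _ _ lm_sq]
lemma lm_arr[simp]: "lm x \<in> Ar" using lm_p hx by simp
lemma lm_dom[simp]: "dm (lm x) = cd (qS J x)" using lm_p hx by simp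
lemma lm_cod[simp]: "cd (lm x) = fst x" using lm_p hx by simp
lemma lm_e: "lm x \<cdot> ee x = lam (fst x)" using lm_p hx by simp
lemma lm_m[simp]: "snd x \<cdot> lm x = mS J x" using lm_p hx by simp

lemma rh_arr[simp]: "rh x \<in> Ar" using hx by (simp add: rh_def)
lemma rh_dom[simp]: "dm (rh x) = fst x" using hx by (simp add: rh_def)
lemma rh_cod[simp]: "cd (rh x) = cd (qS x J)" using hx by (simp add: rh_def)
lemma rh_m[simp]: "mS x J \<cdot> rh x = snd x"
proof -
  have "snd x = (mu \<cdot> ((idn T \<otimes> eta) \<cdot> rho T)) \<cdot> snd x" using hx by (simp add: mon2)
  also have "\<dots> = mu \<cdot> ((idn T \<otimes> eta) \<cdot> (rho T \<cdot> snd x))" using hx by (simp add: assoc)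
  also have "\<dots> = mu \<cdot> ((idn T \<otimes> eta) \<cdot> ((snd x \<otimes> idn U) \<cdot> rho (fst x)))" using hx rho_nat[of "snd x"] by simp
  also have "\<dots> = mS x J \<cdot> rh x" using hx by (simp add: rh_def muf3 nf eta_fact)
  finally show ?thesis by simp
qed
end

context fixes x y z assumes hx: "x \<in> SO" "y \<in> SO" "z \<in> SO"
begin
lemma ea_E[simp]: "ea x y z \<in> E" unfolding ea_def using closE'[OF qS_E[OF hx(1,2)] hx(3)] hx by simp
lemma ea_arr[simp]: "ea x y z \<in> Ar" by (rule E_arr, simp)
lemma ea_dom[simp]: "dm (ea x y z) = tO (tO (fst x) (fst y)) (fst z)" unfolding ea_def using hx by simp
lemma ea_cod[simp]: "cd (ea x y z) = cd (qS (bx x y) z)" unfolding ea_def using hx by simp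
lemma al_sq: "mS (bx x y) z \<cdot> ea x y z =
   mS x (bx y z) \<cdot> (qS x (bx y z) \<cdot> ((idn (fst x) \<otimes> qS y z) \<cdot> alp (fst x) (fst y) (fst z)))"
proof -
  have "mS (bx x y) z \<cdot> ea x y z = mu \<cdot> ((mu \<cdot> (snd x \<otimes> snd y)) \<otimes> snd z)"
    using hx by (simp add: ea_def muf3 nf muf)
  also have "\<dots> = mu \<cdot> ((mu \<otimes> idn T) \<cdot> ((snd x \<otimes> snd y) \<otimes> snd z))" using hx by (simp add: tp_merge)
  also have "\<dots> = (mu \<cdot> (mu \<otimes> idn T)) \<cdot> ((snd x \<otimes> snd y) \<otimes> snd z)" using hx by (simp add: assoc)
  also have "\<dots> = mu \<cdot> ((idn T \<otimes> mu) \<cdot> (alp T T T \<cdot> ((snd x \<otimes> snd y) \<otimes> snd z)))" using hx by (simp add: mon3 assoc)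
  also have "\<dots> = mu \<cdot> ((idn T \<otimes> mu) \<cdot> ((snd x \<otimes> (snd y \<otimes> snd z)) \<cdot> alp (fst x) (fst y) (fst z)))"
    using hx alp_nat[of "snd x" "snd y" "snd z"] by simp
  also have "\<dots> = mS x (bx y z) \<cdot> (qS x (bx y z) \<cdot> ((idn (fst x) \<otimes> qS y z) \<cdot> alp (fst x) (fst y) (fst z)))"
    using hx by (simp add: muf3 nf muf)
  finally show ?thesis .
qed
lemmas al_p = dg_prop[OF ea_E mS_M[OF hx(1) bx_SO[OF hx(2,3)]], OF _ _ _ _ _ _ al_sq, folded al_def]
lemma al_arr[simp]: "al x y z \<in> Ar" using al_p hx by simp
lemma al_dom[simp]: "dm (al x y z) = cd (qS (bx x y) z)" using al_p hx by simp
lemma al_cod[simp]: "cd (al x y z) = cd (qS x (bx y z))" using al_p hx by simp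
lemma al_e: "al x y z \<cdot> ea x y z = qS x (bx y z) \<cdot> ((idn (fst x) \<otimes> qS y z) \<cdot> alp (fst x) (fst y) (fst z))"
  using al_p hx by simp
lemma al_m[simp]: "mS x (bx y z) \<cdot> al x y z = mS (bx x y) z" using al_p hx by simp
end

end

context sk begin

abbreviation "SK \<equiv> slice_skew C K q0 j qS mS"

lemma Arr_S: "Arr S = {(x, f, y). x \<in> SO \<and> y \<in> SO \<and> f \<in> Ar \<and> dm f = fst x \<and> cd f = fst y \<and> snd y \<cdot> f = snd x}"
  using SA_iff by auto
lemma S_dom[simp]: "Dom S F = fst F" by (simp add: slice_def Let_def)
lemma S_cod[simp]: "Cod S F = snd (snd F)" by (simp add: slice_def Let_def)
lemma S_idn[simp]: "Idn S x = (x, idn (fst x), x)" by (simp add: slice_def Let_def)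
lemma S_cmp[simp]: "Cmp S G F = (fst F, fst (snd G) \<cdot> fst (snd F), snd (snd G))" by (simp add: slice_def Let_def)
lemma hom_S: "hom S A B = {F \<in> Arr S. fst F = A \<and> snd (snd F) = B}" by (simp add: hom_def)

lemma SK_U[simp]: "UnO SK = J" by (simp add: slice_skew_def Let_def flip: J_def)
lemma SK_TO[simp]: "TO SK x y = bx x y" by (simp add: slice_skew_def Let_def flip: bx_def)
lemma SK_TA: "x2 \<in> SO \<Longrightarrow> y2 \<in> SO \<Longrightarrow>
   TA SK (x1, f, x2) (y1, g, y2) = (bx x1 y1, tn x1 y1 x2 y2 f g, bx x2 y2)"
  by (simp add: slice_skew_def Let_def tn_def dg_def flip: bx_def)
lemma SK_Lam: "x \<in> SO \<Longrightarrow> Lam SK x = (bx J x, lm x, x)"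
  by (simp add: slice_skew_def Let_def lm_def dg_def ee_def flip: J_def bx_def)
lemma SK_Rho: "Rho SK x = (x, rh x, bx x J)"
  by (simp add: slice_skew_def Let_def rh_def flip: J_def bx_def)
lemma SK_Alp: "x \<in> SO \<Longrightarrow> y \<in> SO \<Longrightarrow> z \<in> SO \<Longrightarrow> Alp SK x y z = (bx (bx x y) z, al x y z, bx x (bx y z))"
  by (simp add: slice_skew_def Let_def al_def dg_def ea_def flip: bx_def)

lemma SA_E: assumes "F \<in> Arr S"
  obtains x f y where "F = (x, f, y)" "x \<in> SO" "y \<in> SO" "f \<in> Ar" "dm f = fst x" "cd f = fst y" "snd y \<cdot> f = snd x"
  using assms by (auto simp: Arr_S)

lemma cat_S: "category S"
  unfolding category_def hom_S
proof (intro conjI ballI impI)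
  show "\<And>F. F \<in> Arr S \<Longrightarrow> Dom S F \<in> SO" by (auto simp: Arr_S)
  show "\<And>F. F \<in> Arr S \<Longrightarrow> Cod S F \<in> SO" by (auto simp: Arr_S)
  show "\<And>A. A \<in> SO \<Longrightarrow> Idn S A \<in> {F \<in> Arr S. fst F = A \<and> snd (snd F) = A}" by (auto simp: Arr_S)
  show "\<And>F G. F \<in> Arr S \<Longrightarrow> G \<in> Arr S \<Longrightarrow> Cod S F = Dom S G \<Longrightarrow>
     Cmp S G F \<in> {H \<in> Arr S. fst H = Dom S F \<and> snd (snd H) = Cod S G}"
  proof -
    fix F G assume a: "F \<in> Arr S" "G \<in> Arr S" "Cod S F = Dom S G"
    obtain x f y where F: "F = (x, f, y)" "x \<in> SO" "y \<in> SO" "f \<in> Ar" "dm f = fst x" "cd f = fst y" "snd y \<cdot> f = snd x"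
      using a(1) by (rule SA_E)
    obtain x' g y' where G: "G = (x', g, y')" "x' \<in> SO" "y' \<in> SO" "g \<in> Ar" "dm g = fst x'" "cd g = fst y'" "snd y' \<cdot> g = snd x'"
      using a(2) by (rule SA_E)
    have "x' = y" using a(3) F G by auto
    then have "snd y' \<cdot> (g \<cdot> f) = snd x" using F G by (simp add: assoc[symmetric])
    then show "Cmp S G F \<in> {H \<in> Arr S. fst H = Dom S F \<and> snd (snd H) = Cod S G}"
      using F G \<open>x' = y\<close> by (simp add: Arr_S)
  qed
  show "\<And>F. F \<in> Arr S \<Longrightarrow> Cmp S (Idn S (Cod S F)) F = F" by (auto simp: Arr_S)
  show "\<And>F. F \<in> Arr S \<Longrightarrow> Cmp S F (Idn S (Dom S F)) = F" by (auto simp: Arr_S)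
  show "\<And>F G H. F \<in> Arr S \<Longrightarrow> G \<in> Arr S \<Longrightarrow> H \<in> Arr S \<Longrightarrow> Cod S F = Dom S G \<Longrightarrow> Cod S G = Dom S H \<Longrightarrow>
     Cmp S H (Cmp S G F) = Cmp S (Cmp S H G) F"
  proof -
    fix F G H assume a: "F \<in> Arr S" "G \<in> Arr S" "H \<in> Arr S" "Cod S F = Dom S G" "Cod S G = Dom S H"
    obtain x f y where F: "F = (x, f, y)" "x \<in> SO" "y \<in> SO" "f \<in> Ar" "dm f = fst x" "cd f = fst y" "snd y \<cdot> f = snd x"
      using a(1) by (rule SA_E)
    obtain x' g y' where G: "G = (x', g, y')" "x' \<in> SO" "y' \<in> SO" "g \<in> Ar" "dm g = fst x'" "cd g = fst y'" "snd y' \<cdot> g = snd x'"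
      using a(2) by (rule SA_E)
    obtain x'' h y'' where H: "H = (x'', h, y'')" "x'' \<in> SO" "y'' \<in> SO" "h \<in> Ar" "dm h = fst x''" "cd h = fst y''" "snd y'' \<cdot> h = snd x''"
      using a(3) by (rule SA_E)
    have "x' = y" "x'' = y'" using a(4,5) F G H by auto
    then show "Cmp S H (Cmp S G F) = Cmp S (Cmp S H G) F" using F G H by (simp add: assoc)
  qed
qed

end

context sk begin

lemmas tn_q3 = comp_rw[OF tn_q]
lemmas tn_m3 = comp_rw[OF tn_m]
lemmas al_m3 = comp_rw[OF al_m]
lemmas lm_m3 = comp_rw[OF lm_m]
lemmas rh_m3 = comp_rw[OF rh_m]
lemmas lm_e3 = comp_rw[OF lm_e]
lemmas al_e3 = comp_rw[OF al_e]

lemma L2: "UnO SK \<in> Obj S" by simp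
lemma L3: "\<forall>X\<in>Obj S. \<forall>Y\<in>Obj S. TO SK X Y \<in> Obj S" by simp

lemma L4: "\<forall>f\<in>Arr S. \<forall>g\<in>Arr S. TA SK f g \<in> hom S (TO SK (Dom S f) (Dom S g)) (TO SK (Cod S f) (Cod S g))"
proof (intro ballI)
  fix F G assume "F \<in> Arr S" "G \<in> Arr S"
  then obtain x1 f x2 y1 g y2 where F: "F = (x1, f, x2)" "x1 \<in> SO" "x2 \<in> SO" "f \<in> Ar" "dm f = fst x1" "cd f = fst x2" "snd x2 \<cdot> f = snd x1"
    and G: "G = (y1, g, y2)" "y1 \<in> SO" "y2 \<in> SO" "g \<in> Ar" "dm g = fst y1" "cd g = fst y2" "snd y2 \<cdot> g = snd y1"
    by (metis SA_E)
  show "TA SK F G \<in> hom S (TO SK (Dom S F) (Dom S G)) (TO SK (Cod S F) (Cod S G))"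
    using F G by (simp add: SK_TA hom_S Arr_S)
qed

lemma L5: "\<forall>X\<in>Obj S. \<forall>Y\<in>Obj S. TA SK (Idn S X) (Idn S Y) = Idn S (TO SK X Y)"
proof (intro ballI)
  fix X Y assume h: "X \<in> SO" "Y \<in> SO"
  have "tn X Y X Y (idn (fst X)) (idn (fst Y)) = idn (cd (qS X Y))"
    using h by (intro tn_uniq) simp_all
  then show "TA SK (Idn S X) (Idn S Y) = Idn S (TO SK X Y)" using h by (simp add: SK_TA)
qed

lemma L6: "\<forall>f\<in>Arr S. \<forall>f'\<in>Arr S. \<forall>g\<in>Arr S. \<forall>g'\<in>Arr S.
        Cod S f = Dom S f' \<longrightarrow> Cod S g = Dom S g' \<longrightarrow>
        TA SK (Cmp S f' f) (Cmp S g' g) = Cmp S (TA SK f' g') (TA SK f g)"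
proof (intro ballI impI)
  fix F F' G G' assume a: "F \<in> Arr S" "F' \<in> Arr S" "G \<in> Arr S" "G' \<in> Arr S" "Cod S F = Dom S F'" "Cod S G = Dom S G'"
  obtain x1 f x2 where F: "F = (x1, f, x2)" "x1 \<in> SO" "x2 \<in> SO" "f \<in> Ar" "dm f = fst x1" "cd f = fst x2" "snd x2 \<cdot> f = snd x1"
    using a(1) by (rule SA_E)
  obtain x2' f' x3 where F': "F' = (x2', f', x3)" "x2' \<in> SO" "x3 \<in> SO" "f' \<in> Ar" "dm f' = fst x2'" "cd f' = fst x3" "snd x3 \<cdot> f' = snd x2'"
    using a(2) by (rule SA_E)
  obtain y1 g y2 where G: "G = (y1, g, y2)" "y1 \<in> SO" "y2 \<in> SO" "g \<in> Ar" "dm g = fst y1" "cd g = fst y2" "snd y2 \<cdot> g = snd y1"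
    using a(3) by (rule SA_E)
  obtain y2' g' y3 where G': "G' = (y2', g', y3)" "y2' \<in> SO" "y3 \<in> SO" "g' \<in> Ar" "dm g' = fst y2'" "cd g' = fst y3" "snd y3 \<cdot> g' = snd y2'"
    using a(4) by (rule SA_E)
  have e: "x2' = x2" "y2' = y2" using a(5,6) F F' G G' by auto
  note hs = F F'[unfolded e] G G'[unfolded e]
  have c1: "snd x3 \<cdot> (f' \<cdot> f) = snd x1" using hs by (simp add: assoc[symmetric])
  have c2: "snd y3 \<cdot> (g' \<cdot> g) = snd y1" using hs by (simp add: assoc[symmetric])
  have "tn x1 y1 x3 y3 (f' \<cdot> f) (g' \<cdot> g) = tn x2 y2 x3 y3 f' g' \<cdot> tn x1 y1 x2 y2 f g"
    apply (rule tn_uniq)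
    using hs c1 c2 by (simp_all add: nf tn_q3 tn_m3 tn_q)
  then show "TA SK (Cmp S F' F) (Cmp S G' G) = Cmp S (TA SK F' G') (TA SK F G)"
    using hs by (simp add: SK_TA)
qed

lemma L7: "\<forall>X\<in>Obj S. Lam SK X \<in> hom S (TO SK (UnO SK) X) X"
  by (auto simp: SK_Lam hom_S Arr_S)
lemma L8: "\<forall>X\<in>Obj S. Rho SK X \<in> hom S X (TO SK X (UnO SK))"
  by (auto simp: SK_Rho hom_S Arr_S)
lemma L9: "\<forall>X\<in>Obj S. \<forall>Y\<in>Obj S. \<forall>Z\<in>Obj S.
        Alp SK X Y Z \<in> hom S (TO SK (TO SK X Y) Z) (TO SK X (TO SK Y Z))"
  by (auto simp: SK_Alp hom_S Arr_S)


lemma L10: "\<forall>f\<in>Arr S. Cmp S f (Lam SK (Dom S f)) = Cmp S (Lam SK (Cod S f)) (TA SK (Idn S (UnO SK)) f)"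
proof (intro ballI)
  fix F assume "F \<in> Arr S"
  then obtain x f y where F: "F = (x, f, y)" "x \<in> SO" "y \<in> SO" "f \<in> Ar" "dm f = fst x" "cd f = fst y" "snd y \<cdot> f = snd x"
    by (rule SA_E)
  have J: "J \<in> SO" "idn (fst J) \<in> Ar" "dm (idn (fst J)) = fst J" "cd (idn (fst J)) = fst J" "snd J \<cdot> idn (fst J) = snd J"
    by simp_all
  let ?t = "tn J x J y (idn (fst J)) f"
  have "(lm y \<cdot> ?t) \<cdot> ee x = lm y \<cdot> (qS J y \<cdot> (q0 \<otimes> f))"
    using F by (simp add: ee_def nf tn_q3)
  also have "\<dots> = lm y \<cdot> (ee y \<cdot> (idn U \<otimes> f))"
    using F by (simp add: ee_def nf)
  also have "\<dots> = lam (fst y) \<cdot> (idn U \<otimes> f)"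
    using F by (simp add: lm_e3)
  also have "\<dots> = f \<cdot> lam (fst x)"
    using F lam_nat[of f] by simp
  also have "\<dots> = (f \<cdot> lm x) \<cdot> ee x"
    using F by (simp add: assoc lm_e)
  finally have e1: "(f \<cdot> lm x) \<cdot> ee x = (lm y \<cdot> ?t) \<cdot> ee x" ..
  have e2: "snd y \<cdot> (f \<cdot> lm x) = snd y \<cdot> (lm y \<cdot> ?t)"
    using F by (simp add: lm_m3 tn_m assoc[symmetric])
  have "f \<cdot> lm x = lm y \<cdot> ?t"
    by (rule epi[OF ee_E[OF F(2)] SO_snd(1)[OF F(3)] _ _ _ _ _ _ e1 e2]) (use F in simp_all)
  then show "Cmp S F (Lam SK (Dom S F)) = Cmp S (Lam SK (Cod S F)) (TA SK (Idn S (UnO SK)) F)"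
    using F by (simp add: SK_TA SK_Lam)
qed

lemma L11: "\<forall>f\<in>Arr S. Cmp S (Rho SK (Cod S f)) f = Cmp S (TA SK f (Idn S (UnO SK))) (Rho SK (Dom S f))"
proof (intro ballI)
  fix F assume "F \<in> Arr S"
  then obtain x f y where F: "F = (x, f, y)" "x \<in> SO" "y \<in> SO" "f \<in> Ar" "dm f = fst x" "cd f = fst y" "snd y \<cdot> f = snd x"
    by (rule SA_E)
  have r: "rho (fst y) \<cdot> f = (f \<otimes> idn U) \<cdot> rho (fst x)" using F rho_nat[of f] by simp
  have "rh y \<cdot> f = tn x J y J f (idn (fst J)) \<cdot> rh x"
    using F r by (simp add: rh_def nf tn_q3)
  then show "Cmp S (Rho SK (Cod S F)) F = Cmp S (TA SK F (Idn S (UnO SK))) (Rho SK (Dom S F))"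
    using F by (simp add: SK_TA SK_Rho)
qed

lemma L13: "Cmp S (Lam SK (UnO SK)) (Rho SK (UnO SK)) = Idn S (UnO SK)"
proof -
  have r: "rho (cd q0) \<cdot> q0 = (q0 \<otimes> idn U) \<cdot> rho U" using rho_nat[of q0] by simp
  have l: "q0 \<cdot> lam U = lam (cd q0) \<cdot> (idn U \<otimes> q0)" using lam_nat[of q0] by simp
  have "(lm J \<cdot> rh J) \<cdot> q0 = lm J \<cdot> (qS J J \<cdot> ((q0 \<otimes> q0) \<cdot> rho U))"
    using r by (simp add: rh_def nf)
  also have "\<dots> = lm J \<cdot> (ee J \<cdot> ((idn U \<otimes> q0) \<cdot> rho U))"
    by (simp add: ee_def nf)
  also have "\<dots> = lam (cd q0) \<cdot> ((idn U \<otimes> q0) \<cdot> rho U)"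
    by (simp add: lm_e3)
  also have "\<dots> = q0 \<cdot> (lam U \<cdot> rho U)"
    using l by (simp add: assoc[symmetric])
  also have "\<dots> = idn (cd q0) \<cdot> q0" by (simp add: ax1)
  finally have e1: "(lm J \<cdot> rh J) \<cdot> q0 = idn (cd q0) \<cdot> q0" .
  have e2: "j \<cdot> (lm J \<cdot> rh J) = j \<cdot> idn (cd q0)"
    using lm_m3[of J "rh J"] by simp
  have "lm J \<cdot> rh J = idn (cd q0)"
    by (rule epi[OF q0_simps(1) q0_simps(3) _ _ _ _ _ _ e1 e2]) simp_all
  then show ?thesis by (simp add: SK_Lam SK_Rho)
qed


end

context sk begin

lemma L12: "\<forall>f\<in>Arr S. \<forall>g\<in>Arr S. \<forall>h\<in>Arr S.
        Cmp S (Alp SK (Cod S f) (Cod S g) (Cod S h)) (TA SK (TA SK f g) h) =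
        Cmp S (TA SK f (TA SK g h)) (Alp SK (Dom S f) (Dom S g) (Dom S h))"
proof (intro ballI)
  fix F G H assume "F \<in> Arr S" "G \<in> Arr S" "H \<in> Arr S"
  then obtain x1 f x2 y1 g y2 z1 h z2 where F: "F = (x1, f, x2)" "x1 \<in> SO" "x2 \<in> SO" "f \<in> Ar" "dm f = fst x1" "cd f = fst x2" "snd x2 \<cdot> f = snd x1"
    and G: "G = (y1, g, y2)" "y1 \<in> SO" "y2 \<in> SO" "g \<in> Ar" "dm g = fst y1" "cd g = fst y2" "snd y2 \<cdot> g = snd y1"
    and H: "H = (z1, h, z2)" "z1 \<in> SO" "z2 \<in> SO" "h \<in> Ar" "dm h = fst z1" "cd h = fst z2" "snd z2 \<cdot> h = snd z1"
    by (metis SA_E)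
  note hs = F G H
  let ?tfg = "tn x1 y1 x2 y2 f g" and ?tgh = "tn y1 z1 y2 z2 g h"
  let ?tO = "tn (bx x1 y1) z1 (bx x2 y2) z2 ?tfg h" and ?tO' = "tn x1 (bx y1 z1) x2 (bx y2 z2) f ?tgh"
  have an: "alp (fst x2) (fst y2) (fst z2) \<cdot> ((f \<otimes> g) \<otimes> h) = (f \<otimes> (g \<otimes> h)) \<cdot> alp (fst x1) (fst y1) (fst z1)"
    using alp_nat[of f g h] hs by simp
  have "(al x2 y2 z2 \<cdot> ?tO) \<cdot> ea x1 y1 z1 = al x2 y2 z2 \<cdot> (ea x2 y2 z2 \<cdot> ((f \<otimes> g) \<otimes> h))"
    using hs by (simp add: ea_def nf tn_q3 tn_q)
  also have "\<dots> = qS x2 (bx y2 z2) \<cdot> ((idn (fst x2) \<otimes> qS y2 z2) \<cdot> (alp (fst x2) (fst y2) (fst z2) \<cdot> ((f \<otimes> g) \<otimes> h)))"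
    using hs by (simp add: al_e3 assoc)
  also have "\<dots> = qS x2 (bx y2 z2) \<cdot> ((idn (fst x2) \<otimes> qS y2 z2) \<cdot> ((f \<otimes> (g \<otimes> h)) \<cdot> alp (fst x1) (fst y1) (fst z1)))"
    using an by simp
  also have "\<dots> = (?tO' \<cdot> al x1 y1 z1) \<cdot> ea x1 y1 z1"
    using hs by (simp add: nf al_e tn_q3 tn_q)
  finally have e1: "(al x2 y2 z2 \<cdot> ?tO) \<cdot> ea x1 y1 z1 = (?tO' \<cdot> al x1 y1 z1) \<cdot> ea x1 y1 z1" .
  have e2: "mS x2 (bx y2 z2) \<cdot> (al x2 y2 z2 \<cdot> ?tO) = mS x2 (bx y2 z2) \<cdot> (?tO' \<cdot> al x1 y1 z1)"
    using hs by (simp add: al_m3 tn_m3)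
  have "al x2 y2 z2 \<cdot> ?tO = ?tO' \<cdot> al x1 y1 z1"
    by (rule epi[OF ea_E[OF F(2) G(2) H(2)] mS_M[OF F(3) bx_SO[OF G(3) H(3)]] _ _ _ _ _ _ e1 e2]) (use hs in simp_all)
  then show "Cmp S (Alp SK (Cod S F) (Cod S G) (Cod S H)) (TA SK (TA SK F G) H) =
        Cmp S (TA SK F (TA SK G H)) (Alp SK (Dom S F) (Dom S G) (Dom S H))"
    using hs by (simp add: SK_TA SK_Alp)
qed

lemma L14: "\<forall>X\<in>Obj S. \<forall>Y\<in>Obj S.
        Cmp S (TA SK (Idn S X) (Lam SK Y)) (Cmp S (Alp SK X (UnO SK) Y) (TA SK (Rho SK X) (Idn S Y)))
          = Idn S (TO SK X Y)"
proof (intro ballI)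
  fix X Y assume h: "X \<in> SO" "Y \<in> SO"
  let ?L = "tn X (bx J Y) X Y (idn (fst X)) (lm Y)" and ?R = "tn X Y (bx X J) Y (rh X) (idn (fst Y))"
  let ?X = "fst X" and ?Y = "fst Y"
  have an: "alp ?X (cd q0) ?Y \<cdot> ((idn ?X \<otimes> q0) \<otimes> idn ?Y) = (idn ?X \<otimes> (q0 \<otimes> idn ?Y)) \<cdot> alp ?X U ?Y"
    using alp_nat[of "idn ?X" q0 "idn ?Y"] h by simp
  have sp: "((idn ?X \<otimes> q0) \<cdot> rho ?X) \<otimes> idn ?Y = ((idn ?X \<otimes> q0) \<otimes> idn ?Y) \<cdot> (rho ?X \<otimes> idn ?Y)"
    using h by (simp add: tp_merge)
  have "(?L \<cdot> (al X J Y \<cdot> ?R)) \<cdot> qS X Y = ?L \<cdot> (al X J Y \<cdot> (qS (bx X J) Y \<cdot> (rh X \<otimes> idn ?Y)))"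
    using h by (simp add: assoc tn_q)
  also have "\<dots> = ?L \<cdot> (al X J Y \<cdot> (ea X J Y \<cdot> (((idn ?X \<otimes> q0) \<cdot> rho ?X) \<otimes> idn ?Y)))"
    using h by (simp add: ea_def rh_def nf)
  also have "\<dots> = ?L \<cdot> (qS X (bx J Y) \<cdot> ((idn ?X \<otimes> qS J Y) \<cdot> (alp ?X (cd q0) ?Y \<cdot> (((idn ?X \<otimes> q0) \<cdot> rho ?X) \<otimes> idn ?Y))))"
    using h by (simp add: al_e3 assoc)
  also have "\<dots> = ?L \<cdot> (qS X (bx J Y) \<cdot> ((idn ?X \<otimes> qS J Y) \<cdot> ((idn ?X \<otimes> (q0 \<otimes> idn ?Y)) \<cdot> (alp ?X U ?Y \<cdot> (rho ?X \<otimes> idn ?Y)))))"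
    unfolding sp using h by (simp add: comp_rw[OF an] assoc)
  also have "\<dots> = qS X Y \<cdot> ((idn ?X \<otimes> (lm Y \<cdot> ee Y)) \<cdot> (alp ?X U ?Y \<cdot> (rho ?X \<otimes> idn ?Y)))"
    using h by (simp add: ee_def nf tn_q3)
  also have "\<dots> = qS X Y \<cdot> ((idn ?X \<otimes> lam ?Y) \<cdot> (alp ?X U ?Y \<cdot> (rho ?X \<otimes> idn ?Y)))"
    using h by (simp add: lm_e)
  also have "\<dots> = idn (cd (qS X Y)) \<cdot> qS X Y"
    using h by (simp add: ax2)
  finally have e1: "(?L \<cdot> (al X J Y \<cdot> ?R)) \<cdot> qS X Y = idn (cd (qS X Y)) \<cdot> qS X Y" .
  have e2: "mS X Y \<cdot> (?L \<cdot> (al X J Y \<cdot> ?R)) = mS X Y \<cdot> idn (cd (qS X Y))"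
    using h by (simp add: al_m3 tn_m3)
  have "?L \<cdot> (al X J Y \<cdot> ?R) = idn (cd (qS X Y))"
    by (rule epi[OF qS_E[OF h] mS_M[OF h] _ _ _ _ _ _ e1 e2]) (use h in simp_all)
  then show "Cmp S (TA SK (Idn S X) (Lam SK Y)) (Cmp S (Alp SK X (UnO SK) Y) (TA SK (Rho SK X) (Idn S Y)))
          = Idn S (TO SK X Y)"
    using h by (simp add: SK_TA SK_Alp SK_Lam SK_Rho)
qed

end

context sk begin

lemma L15: "\<forall>X\<in>Obj S. \<forall>Y\<in>Obj S.
        Cmp S (Lam SK (TO SK X Y)) (Alp SK (UnO SK) X Y) = TA SK (Lam SK X) (Idn S Y)"
proof (intro ballI)
  fix X Y assume h: "X \<in> SO" "Y \<in> SO"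
  let ?X = "fst X" and ?Y = "fst Y"
  let ?e = "ea J X Y \<cdot> ((q0 \<otimes> idn ?X) \<otimes> idn ?Y)"
  let ?R = "tn (bx J X) Y X Y (lm X) (idn ?Y)"
  have q1: "q0 \<otimes> idn ?X \<in> E" using closE'[OF q0_simps(1) h(1)] .
  have q2: "(q0 \<otimes> idn ?X) \<otimes> idn ?Y \<in> E" using closE'[OF q1 h(2)] .
  have eE: "?e \<in> E" using q2 h by simp
  have an: "alp (cd q0) ?X ?Y \<cdot> ((q0 \<otimes> idn ?X) \<otimes> idn ?Y) = (q0 \<otimes> idn (tO ?X ?Y)) \<cdot> alp U ?X ?Y"
    using alp_nat[of q0 "idn ?X" "idn ?Y"] h by simp
  have ln: "qS X Y \<cdot> lam (tO ?X ?Y) = lam (cd (qS X Y)) \<cdot> (idn U \<otimes> qS X Y)"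
    using lam_nat[of "qS X Y"] h by simp
  have "(lm (bx X Y) \<cdot> al J X Y) \<cdot> ?e = lm (bx X Y) \<cdot> (qS J (bx X Y) \<cdot> ((idn (cd q0) \<otimes> qS X Y) \<cdot>
        (alp (cd q0) ?X ?Y \<cdot> ((q0 \<otimes> idn ?X) \<otimes> idn ?Y))))"
    using h by (simp add: assoc al_e3)
  also have "\<dots> = lm (bx X Y) \<cdot> (qS J (bx X Y) \<cdot> ((idn (cd q0) \<otimes> qS X Y) \<cdot> ((q0 \<otimes> idn (tO ?X ?Y)) \<cdot> alp U ?X ?Y)))"
    using an by simp
  also have "\<dots> = lm (bx X Y) \<cdot> (ee (bx X Y) \<cdot> ((idn U \<otimes> qS X Y) \<cdot> alp U ?X ?Y))"
    using h by (simp add: ee_def nf)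
  also have "\<dots> = lam (cd (qS X Y)) \<cdot> ((idn U \<otimes> qS X Y) \<cdot> alp U ?X ?Y)"
    using h by (simp add: lm_e3 assoc)
  also have "\<dots> = qS X Y \<cdot> (lam (tO ?X ?Y) \<cdot> alp U ?X ?Y)"
    using h ln by (simp add: assoc[symmetric])
  also have "\<dots> = qS X Y \<cdot> (lam ?X \<otimes> idn ?Y)"
    using h by (simp add: ax3)
  also have "\<dots> = qS X Y \<cdot> ((lm X \<cdot> ee X) \<otimes> idn ?Y)"
    using h by (simp add: lm_e)
  also have "\<dots> = ?R \<cdot> ?e"
    using h by (simp add: ee_def ea_def nf tn_q3)
  finally have e1: "(lm (bx X Y) \<cdot> al J X Y) \<cdot> ?e = ?R \<cdot> ?e" .
  have lmb: "mS X Y \<cdot> lm (bx X Y) = mS J (bx X Y)" using lm_m[of "bx X Y"] h by simp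
  have e2: "mS X Y \<cdot> (lm (bx X Y) \<cdot> al J X Y) = mS X Y \<cdot> ?R"
    using h by (simp add: comp_rw[OF lmb] tn_m)
  have "lm (bx X Y) \<cdot> al J X Y = ?R"
    by (rule epi[OF eE mS_M[OF h] _ _ _ _ _ _ e1 e2]) (use h in simp_all)
  then show "Cmp S (Lam SK (TO SK X Y)) (Alp SK (UnO SK) X Y) = TA SK (Lam SK X) (Idn S Y)"
    using h by (simp add: SK_TA SK_Alp SK_Lam)
qed

lemma L16: "\<forall>X\<in>Obj S. \<forall>Y\<in>Obj S.
        Cmp S (Alp SK X Y (UnO SK)) (Rho SK (TO SK X Y)) = TA SK (Idn S X) (Rho SK Y)"
proof (intro ballI)
  fix X Y assume h: "X \<in> SO" "Y \<in> SO"
  let ?X = "fst X" and ?Y = "fst Y"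
  let ?R = "tn X Y X (bx Y J) (idn ?X) (rh Y)"
  have rn: "rho (cd (qS X Y)) \<cdot> qS X Y = (qS X Y \<otimes> idn U) \<cdot> rho (tO ?X ?Y)"
    using rho_nat[of "qS X Y"] h by simp
  have an: "alp ?X ?Y (cd q0) \<cdot> (idn (tO ?X ?Y) \<otimes> q0) = (idn ?X \<otimes> (idn ?Y \<otimes> q0)) \<cdot> alp ?X ?Y U"
    using alp_nat[of "idn ?X" "idn ?Y" q0] h by simp
  have "(al X Y J \<cdot> rh (bx X Y)) \<cdot> qS X Y =
     al X Y J \<cdot> (qS (bx X Y) J \<cdot> ((idn (cd (qS X Y)) \<otimes> q0) \<cdot> (rho (cd (qS X Y)) \<cdot> qS X Y)))"
    using h by (simp add: rh_def assoc)
  also have "\<dots> = al X Y J \<cdot> (qS (bx X Y) J \<cdot> ((idn (cd (qS X Y)) \<otimes> q0) \<cdot> ((qS X Y \<otimes> idn U) \<cdot> rho (tO ?X ?Y))))"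
    using rn by simp
  also have "\<dots> = al X Y J \<cdot> (ea X Y J \<cdot> ((idn (tO ?X ?Y) \<otimes> q0) \<cdot> rho (tO ?X ?Y)))"
    using h by (simp add: ea_def nf)
  also have "\<dots> = qS X (bx Y J) \<cdot> ((idn ?X \<otimes> qS Y J) \<cdot> (alp ?X ?Y (cd q0) \<cdot> ((idn (tO ?X ?Y) \<otimes> q0) \<cdot> rho (tO ?X ?Y))))"
    using h by (simp add: al_e3 assoc)
  also have "\<dots> = qS X (bx Y J) \<cdot> ((idn ?X \<otimes> qS Y J) \<cdot> ((idn ?X \<otimes> (idn ?Y \<otimes> q0)) \<cdot> (alp ?X ?Y U \<cdot> rho (tO ?X ?Y))))"
    using h by (simp add: comp_rw[OF an] assoc)
  also have "\<dots> = qS X (bx Y J) \<cdot> ((idn ?X \<otimes> qS Y J) \<cdot> ((idn ?X \<otimes> (idn ?Y \<otimes> q0)) \<cdot> (idn ?X \<otimes> rho ?Y)))"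
    using h by (simp add: ax4)
  also have "\<dots> = qS X (bx Y J) \<cdot> (idn ?X \<otimes> rh Y)"
    using h by (simp add: rh_def nf)
  also have "\<dots> = ?R \<cdot> qS X Y"
    using h by (simp add: tn_q)
  finally have e1: "(al X Y J \<cdot> rh (bx X Y)) \<cdot> qS X Y = ?R \<cdot> qS X Y" .
  have rmb: "mS (bx X Y) J \<cdot> rh (bx X Y) = mS X Y" using rh_m[of "bx X Y"] h by simp
  have e2: "mS X (bx Y J) \<cdot> (al X Y J \<cdot> rh (bx X Y)) = mS X (bx Y J) \<cdot> ?R"
    using h rmb by (simp add: al_m3 tn_m)
  have "al X Y J \<cdot> rh (bx X Y) = ?R"
    by (rule epi[OF qS_E[OF h] mS_M[OF h(1) bx_SO[OF h(2) J_SO]] _ _ _ _ _ _ e1 e2]) (use h in simp_all)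
  then show "Cmp S (Alp SK X Y (UnO SK)) (Rho SK (TO SK X Y)) = TA SK (Idn S X) (Rho SK Y)"
    using h by (simp add: SK_TA SK_Alp SK_Rho)
qed

end

context sk begin

lemma L17: "\<forall>X\<in>Obj S. \<forall>Y\<in>Obj S. \<forall>Z\<in>Obj S. \<forall>W\<in>Obj S.
        Cmp S (TA SK (Idn S X) (Alp SK Y Z W))
              (Cmp S (Alp SK X (TO SK Y Z) W) (TA SK (Alp SK X Y Z) (Idn S W)))
        = Cmp S (Alp SK X Y (TO SK Z W)) (Alp SK (TO SK X Y) Z W)"
proof (intro ballI)
  fix X Y Z W assume h: "X \<in> SO" "Y \<in> SO" "Z \<in> SO" "W \<in> SO"
  let ?X = "fst X" and ?Y = "fst Y" and ?Z = "fst Z" and ?W = "fst W"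
  let ?tA = "tn X (bx (bx Y Z) W) X (bx Y (bx Z W)) (idn ?X) (al Y Z W)"
  let ?tB = "tn (bx (bx X Y) Z) W (bx X (bx Y Z)) W (al X Y Z) (idn ?W)"
  let ?e = "qS (bx (bx X Y) Z) W \<cdot> (ea X Y Z \<otimes> idn ?W)"
  let ?P = "qS X (bx Y (bx Z W)) \<cdot> ((idn ?X \<otimes> qS Y (bx Z W)) \<cdot> ((idn ?X \<otimes> (idn ?Y \<otimes> qS Z W)) \<cdot>
            (alp ?X ?Y (tO ?Z ?W) \<cdot> alp (tO ?X ?Y) ?Z ?W)))"
  have eE: "?e \<in> E" using closE'[OF ea_E[OF h(1,2,3)] h(4)] h by simp
  have sp: "((idn ?X \<otimes> qS Y Z) \<cdot> alp ?X ?Y ?Z) \<otimes> idn ?W = ((idn ?X \<otimes> qS Y Z) \<otimes> idn ?W) \<cdot> (alp ?X ?Y ?Z \<otimes> idn ?W)"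
    using h by (simp add: tp_merge)
  have an1: "alp ?X (cd (qS Y Z)) ?W \<cdot> ((idn ?X \<otimes> qS Y Z) \<otimes> idn ?W) = (idn ?X \<otimes> (qS Y Z \<otimes> idn ?W)) \<cdot> alp ?X (tO ?Y ?Z) ?W"
    using alp_nat[of "idn ?X" "qS Y Z" "idn ?W"] h by simp
  have an2: "alp (cd (qS X Y)) ?Z ?W \<cdot> ((qS X Y \<otimes> idn ?Z) \<otimes> idn ?W) = (qS X Y \<otimes> idn (tO ?Z ?W)) \<cdot> alp (tO ?X ?Y) ?Z ?W"
    using alp_nat[of "qS X Y" "idn ?Z" "idn ?W"] h by simp
  have an3: "alp ?X ?Y (cd (qS Z W)) \<cdot> (idn (tO ?X ?Y) \<otimes> qS Z W) = (idn ?X \<otimes> (idn ?Y \<otimes> qS Z W)) \<cdot> alp ?X ?Y (tO ?Z ?W)"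
    using alp_nat[of "idn ?X" "idn ?Y" "qS Z W"] h by simp
  have "(?tA \<cdot> (al X (bx Y Z) W \<cdot> ?tB)) \<cdot> ?e =
      ?tA \<cdot> (al X (bx Y Z) W \<cdot> (qS (bx X (bx Y Z)) W \<cdot> ((qS X (bx Y Z) \<cdot> ((idn ?X \<otimes> qS Y Z) \<cdot> alp ?X ?Y ?Z)) \<otimes> idn ?W)))"
    using h by (simp add: assoc tn_q3 tp_merge tp_merge3 al_e)
  also have "\<dots> = ?tA \<cdot> (al X (bx Y Z) W \<cdot> (ea X (bx Y Z) W \<cdot> (((idn ?X \<otimes> qS Y Z) \<cdot> alp ?X ?Y ?Z) \<otimes> idn ?W)))"
    using h by (simp add: ea_def nf)
  also have "\<dots> = ?tA \<cdot> (qS X (bx (bx Y Z) W) \<cdot> ((idn ?X \<otimes> qS (bx Y Z) W) \<cdot>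
       (alp ?X (cd (qS Y Z)) ?W \<cdot> (((idn ?X \<otimes> qS Y Z) \<cdot> alp ?X ?Y ?Z) \<otimes> idn ?W))))"
    using h by (simp add: al_e3 assoc)
  also have "\<dots> = ?tA \<cdot> (qS X (bx (bx Y Z) W) \<cdot> ((idn ?X \<otimes> qS (bx Y Z) W) \<cdot>
       ((idn ?X \<otimes> (qS Y Z \<otimes> idn ?W)) \<cdot> (alp ?X (tO ?Y ?Z) ?W \<cdot> (alp ?X ?Y ?Z \<otimes> idn ?W)))))"
    unfolding sp using h by (simp add: comp_rw[OF an1] assoc)
  also have "\<dots> = ?tA \<cdot> (qS X (bx (bx Y Z) W) \<cdot> ((idn ?X \<otimes> ea Y Z W) \<cdot>
       (alp ?X (tO ?Y ?Z) ?W \<cdot> (alp ?X ?Y ?Z \<otimes> idn ?W))))"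
    using h by (simp add: ea_def nf)
  also have "\<dots> = qS X (bx Y (bx Z W)) \<cdot> ((idn ?X \<otimes> (qS Y (bx Z W) \<cdot> ((idn ?Y \<otimes> qS Z W) \<cdot> alp ?Y ?Z ?W))) \<cdot>
       (alp ?X (tO ?Y ?Z) ?W \<cdot> (alp ?X ?Y ?Z \<otimes> idn ?W)))"
    using h by (simp add: tn_q3 tp_merge tp_merge3 assoc al_e)
  also have "\<dots> = qS X (bx Y (bx Z W)) \<cdot> ((idn ?X \<otimes> qS Y (bx Z W)) \<cdot> ((idn ?X \<otimes> (idn ?Y \<otimes> qS Z W)) \<cdot>
       ((idn ?X \<otimes> alp ?Y ?Z ?W) \<cdot> (alp ?X (tO ?Y ?Z) ?W \<cdot> (alp ?X ?Y ?Z \<otimes> idn ?W)))))"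
    using h by (simp add: nf)
  also have "\<dots> = ?P"
    using h by (simp add: ax5)
  finally have l: "(?tA \<cdot> (al X (bx Y Z) W \<cdot> ?tB)) \<cdot> ?e = ?P" .
  have ee2: "?e = ea (bx X Y) Z W \<cdot> ((qS X Y \<otimes> idn ?Z) \<otimes> idn ?W)"
    using h by (simp add: ea_def nf)
  have "(al X Y (bx Z W) \<cdot> al (bx X Y) Z W) \<cdot> ?e =
     al X Y (bx Z W) \<cdot> (al (bx X Y) Z W \<cdot> (ea (bx X Y) Z W \<cdot> ((qS X Y \<otimes> idn ?Z) \<otimes> idn ?W)))"
    unfolding ee2 using h by (simp add: assoc)
  also have "\<dots> = al X Y (bx Z W) \<cdot> (qS (bx X Y) (bx Z W) \<cdot> ((idn (cd (qS X Y)) \<otimes> qS Z W) \<cdot>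
      (alp (cd (qS X Y)) ?Z ?W \<cdot> ((qS X Y \<otimes> idn ?Z) \<otimes> idn ?W))))"
    using h by (simp add: al_e3 assoc)
  also have "\<dots> = al X Y (bx Z W) \<cdot> (qS (bx X Y) (bx Z W) \<cdot> ((idn (cd (qS X Y)) \<otimes> qS Z W) \<cdot>
      ((qS X Y \<otimes> idn (tO ?Z ?W)) \<cdot> alp (tO ?X ?Y) ?Z ?W)))"
    using an2 by simp
  also have "\<dots> = al X Y (bx Z W) \<cdot> (ea X Y (bx Z W) \<cdot> ((idn (tO ?X ?Y) \<otimes> qS Z W) \<cdot> alp (tO ?X ?Y) ?Z ?W))"
    using h by (simp add: ea_def nf)
  also have "\<dots> = qS X (bx Y (bx Z W)) \<cdot> ((idn ?X \<otimes> qS Y (bx Z W)) \<cdot>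
      (alp ?X ?Y (cd (qS Z W)) \<cdot> ((idn (tO ?X ?Y) \<otimes> qS Z W) \<cdot> alp (tO ?X ?Y) ?Z ?W)))"
    using h by (simp add: al_e3 assoc)
  also have "\<dots> = ?P"
    using h by (simp add: comp_rw[OF an3] assoc)
  finally have r: "(al X Y (bx Z W) \<cdot> al (bx X Y) Z W) \<cdot> ?e = ?P" .
  have e1: "(?tA \<cdot> (al X (bx Y Z) W \<cdot> ?tB)) \<cdot> ?e = (al X Y (bx Z W) \<cdot> al (bx X Y) Z W) \<cdot> ?e"
    using l r by simp
  have e2: "mS X (bx Y (bx Z W)) \<cdot> (?tA \<cdot> (al X (bx Y Z) W \<cdot> ?tB)) =
     mS X (bx Y (bx Z W)) \<cdot> (al X Y (bx Z W) \<cdot> al (bx X Y) Z W)"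
    using h by (simp add: tn_m3 al_m3 tn_m al_m)
  have "?tA \<cdot> (al X (bx Y Z) W \<cdot> ?tB) = al X Y (bx Z W) \<cdot> al (bx X Y) Z W"
    by (rule epi[OF eE mS_M[OF h(1) bx_SO[OF h(2) bx_SO[OF h(3,4)]]] _ _ _ _ _ _ e1 e2]) (use h in simp_all)
  then show "Cmp S (TA SK (Idn S X) (Alp SK Y Z W))
              (Cmp S (Alp SK X (TO SK Y Z) W) (TA SK (Alp SK X Y Z) (Idn S W)))
        = Cmp S (Alp SK X Y (TO SK Z W)) (Alp SK (TO SK X Y) Z W)"
    using h by (simp add: SK_TA SK_Alp)
qed

end

context sk begin

lemma lsm_S: "left_skew_monoidal S SK"
  unfolding left_skew_monoidal_def
  by (intro conjI cat_S L2 L3 L4 L5 L6 L7 L8 L9 L10 L11 L12 L13 L14 L15 L16 L17)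

lemma iso_S: assumes "(x, f, y) \<in> Arr S" "iso C f" shows "iso S (x, f, y)"
proof -
  have h: "x \<in> SO" "y \<in> SO" "f \<in> Ar" "dm f = fst x" "cd f = fst y" "snd y \<cdot> f = snd x"
    using assms(1) by (simp_all add: SA_iff)
  obtain g where g: "g \<in> Ar" "dm g = cd f" "cd g = dm f" "g \<cdot> f = idn (dm f)" "f \<cdot> g = idn (cd f)"
    using isoD[OF assms(2)] by blast
  have "snd x \<cdot> g = (snd y \<cdot> f) \<cdot> g" using h by simp
  also have "\<dots> = snd y \<cdot> (f \<cdot> g)" by (rule assoc) (use h g in simp_all)
  also have "\<dots> = snd y" using h g by simp
  finally have sg: "snd x \<cdot> g = snd y" .
  have G: "(y, g, x) \<in> hom S (Cod S (x, f, y)) (Dom S (x, f, y))"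
    using h g sg by (simp add: hom_S SA_iff)
  show ?thesis unfolding iso_def
    using assms(1) G h g by (intro conjI bexI[of _ "(y, g, x)"]) simp_all
qed

lemma lam_iso: assumes "x \<in> SO" "iso C (lam (fst x))" shows "iso S (Lam SK x)"
proof -
  obtain g where g: "g \<in> Ar" "dm g = fst x" "cd g = tO U (fst x)" "g \<cdot> lam (fst x) = idn (tO U (fst x))"
     "lam (fst x) \<cdot> g = idn (fst x)"
    using isoD[OF assms(2)] assms(1) by auto
  have gi: "iso C g" using iso_inv[OF assms(2)] g assms(1) by simp
  have gE: "g \<in> E" using iso_E[OF gi] .
  have e'E: "ee x \<cdot> g \<in> E" using gE g assms(1) by simp
  have lmM: "lm x \<in> M" using M_cancel[of "snd x" "mS J x" "lm x"] assms(1) by simp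
  have "lm x \<cdot> (ee x \<cdot> g) = idn (fst x)" using g assms(1) by (simp add: assoc[symmetric] lm_e)
  then have "iso C (lm x)" using split_iso[OF e'E lmM] g assms(1) by simp
  moreover have "(bx J x, lm x, x) \<in> Arr S" using assms(1) by (simp add: SA_iff)
  ultimately show ?thesis using iso_S assms(1) by (simp add: SK_Lam)
qed

context
  assumes closE2: "\<forall>e\<in>E. \<forall>x\<in>SO. idn (fst x) \<otimes> e \<in> E"
begin
lemma rho_iso: assumes "x \<in> SO" "iso C (rho (fst x))" shows "iso S (Rho SK x)"
proof -
  have a: "idn (fst x) \<otimes> q0 \<in> E" using closE2 assms(1) by simp
  have r: "rho (fst x) \<in> E" using iso_E[OF assms(2)] .
  have rE: "rh x \<in> E" using a r assms(1) by (simp add: rh_def)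
  have rM: "rh x \<in> M" using M_cancel[of "mS x J" "snd x" "rh x"] assms(1) by simp
  have "iso C (rh x)" using EM_iso[OF rE rM] .
  moreover have "(x, rh x, bx x J) \<in> Arr S" using assms(1) by (simp add: SA_iff)
  ultimately show ?thesis using iso_S by (simp add: SK_Rho)
qed

lemma alp_iso: assumes "x \<in> SO" "y \<in> SO" "z \<in> SO" "iso C (alp (fst x) (fst y) (fst z))"
  shows "iso S (Alp SK x y z)"
proof -
  have a: "idn (fst x) \<otimes> qS y z \<in> E" using closE2 assms by simp
  have r: "alp (fst x) (fst y) (fst z) \<in> E" using iso_E[OF assms(4)] .
  have ae: "al x y z \<cdot> ea x y z \<in> E" using a r assms by (simp add: al_e)
  have aE: "al x y z \<in> E" by (rule E_cancel[OF ea_E[OF assms(1-3)] al_arr[OF assms(1-3)] _ ae]) (use assms in simp)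
  have aM: "al x y z \<in> M" by (rule M_cancel[of "mS x (bx y z)" "mS (bx x y) z"]) (use assms in simp_all)
  have "iso C (al x y z)" using EM_iso[OF aE aM] .
  moreover have "(bx (bx x y) z, al x y z, bx x (bx y z)) \<in> Arr S" using assms by (simp add: SA_iff)
  ultimately show ?thesis using iso_S assms by (simp add: SK_Alp)
qed
end

lemma main: "left_skew_monoidal S SK \<and>
         ((\<forall>X\<in>Obj C. iso C (Lam K X)) \<longrightarrow>
            (\<forall>x\<in>Obj S. iso S (Lam SK x))) \<and>
         ((\<forall>e\<in>E. \<forall>x\<in>Obj S. TA K (Idn C (fst x)) e \<in> E) \<and> monoidal C K \<longrightarrow>
            monoidal S SK)"
proof (intro conjI impI ballI)
  show "left_skew_monoidal S SK" by (rule lsm_S)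
  show "\<And>x. \<forall>X\<in>Ob. iso C (lam X) \<Longrightarrow> x \<in> SO \<Longrightarrow> iso S (Lam SK x)"
  proof -
    fix x assume a: "\<forall>X\<in>Ob. iso C (lam X)" "x \<in> SO"
    show "iso S (Lam SK x)" by (rule lam_iso[OF a(2)]) (use a in simp)
  qed
  assume c: "(\<forall>e\<in>E. \<forall>x\<in>SO. idn (fst x) \<otimes> e \<in> E) \<and> monoidal C K"
  then have c1: "\<forall>e\<in>E. \<forall>x\<in>SO. idn (fst x) \<otimes> e \<in> E" and c2: "monoidal C K" by auto
  show "monoidal S SK"
    unfolding monoidal_def
  proof (intro conjI ballI)
    show "left_skew_monoidal S SK" by (rule lsm_S)
    have m: "\<forall>X\<in>Ob. iso C (lam X)" "\<forall>X\<in>Ob. iso C (rho X)" "\<forall>X\<in>Ob. \<forall>Y\<in>Ob. \<forall>Z\<in>Ob. iso C (alp X Y Z)"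
      using c2 unfolding monoidal_def by blast+
    show "\<And>X. X \<in> SO \<Longrightarrow> iso S (Lam SK X)"
    proof -
      fix X assume X: "X \<in> SO"
      show "iso S (Lam SK X)" by (rule lam_iso[OF X]) (use m(1) X in simp)
    qed
    show "\<And>X. X \<in> SO \<Longrightarrow> iso S (Rho SK X)"
    proof -
      fix X assume X: "X \<in> SO"
      show "iso S (Rho SK X)" by (rule rho_iso[OF c1 X]) (use m(2) X in simp)
    qed
    show "\<And>X Y Z. X \<in> SO \<Longrightarrow> Y \<in> SO \<Longrightarrow> Z \<in> SO \<Longrightarrow> iso S (Alp SK X Y Z)"
    proof -
      fix X Y Z assume X: "X \<in> SO" "Y \<in> SO" "Z \<in> SO"
      show "iso S (Alp SK X Y Z)" by (rule alp_iso[OF c1 X]) (use m(3) X in simp)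
    qed
  qed
qed

end

theorem theorem3p9:
  fixes C :: "('o, 'a) cat" and K :: "('o, 'a) skew"
    and T :: 'o and eta mu :: 'a and E M :: "'a set"
    and q0 j :: 'a and qS mS :: "'o \<times> 'a \<Rightarrow> 'o \<times> 'a \<Rightarrow> 'a"
  assumes skew: "left_skew_monoidal C K"
    and mon: "monoid C K T eta mu"
    and fs: "ofs C E M"
    and closE: "\<forall>e\<in>E. \<forall>x\<in>Obj (slice C M T). TA K e (Idn C (fst x)) \<in> E"
    and q0: "q0 \<in> E" "Dom C q0 = UnO K"
    and j: "j \<in> M" "Dom C j = Cod C q0" "Cod C j = T"
    and eta_fact: "Cmp C j q0 = eta"
    and qS: "\<forall>x\<in>Obj (slice C M T). \<forall>y\<in>Obj (slice C M T).
               qS x y \<in> E \<and> Dom C (qS x y) = TO K (fst x) (fst y)"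
    and mS: "\<forall>x\<in>Obj (slice C M T). \<forall>y\<in>Obj (slice C M T).
               mS x y \<in> M \<and> Dom C (mS x y) = Cod C (qS x y) \<and> Cod C (mS x y) = T"
    and mu_fact: "\<forall>x\<in>Obj (slice C M T). \<forall>y\<in>Obj (slice C M T).
               Cmp C (mS x y) (qS x y) = Cmp C mu (TA K (snd x) (snd y))"
  shows "left_skew_monoidal (slice C M T) (slice_skew C K q0 j qS mS) \<and>
         ((\<forall>X\<in>Obj C. iso C (Lam K X)) \<longrightarrow>
            (\<forall>x\<in>Obj (slice C M T). iso (slice C M T) (Lam (slice_skew C K q0 j qS mS) x))) \<and>
         ((\<forall>e\<in>E. \<forall>x\<in>Obj (slice C M T). TA K (Idn C (fst x)) e \<in> E) \<and> monoidal C K \<longrightarrow>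
            monoidal (slice C M T) (slice_skew C K q0 j qS mS))"
proof -
  interpret sk C K T eta mu E M q0 j qS mS
    by unfold_locales (rule assms)+
  show ?thesis by (rule main)
qed


end
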